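(* Let $(\mathcal E,B)$ be a product system (with unitaries $B_{s,t}:\mathcal E_{s+t}\to\mathcal E_s\otimes\mathcal E_t$) and let $F=(F_t)_{t>0}$ be an inclusion subsystem of $(\mathcal E,B)$. For $t>0$ set $$\tilde F_t=\overline{\mathrm{span}}\{x\otimes y: x\in\mathcal E_r\ominus F_r,\ y\in\mathcal E_{t-r}\ominus F_{t-r}\text{ for some }0<r<t\}\subset\mathcal E_t$$ (using $\mathcal E_t\cong\mathcal E_r\otimes\mathcal E_{t-r}$ via $B_{r,t-r}$) and $F'_t=\mathcal E_t\ominus\tilde F_t$. Then $(F'_t,B_{s,t}|_{F'_{s+t}})$ is an inclusion system, i.e. $B_{s,t}(F'_{s+t})\subset F'_s\otimes F'_t$ for all $s,t>0$.
   Context: A product system is a measurable family of separable Hilbert spaces $(\mathcal E_t)_{t>0}$ with unitaries $B_{s,t}:\mathcal E_{s+t}\to\mathcal E_s\otimes\mathcal E_t$ satisfying $(B_{r,s}\otimes 1)B_{r+s,t}=(1\otimes B_{s,t})B_{r,s+t}$. An inclusion system is a family of Hilbert spaces $E_t$ with isometries $\beta_{s,t}:E_{s+t}\to E_s\otimes E_t$ satisfying the same associativity relation. An inclusion subsystem of $(\mathcal E,B)$ is a family of closed subspaces $F_t\subset\mathcal E_t$ with $B_{s,t}(F_{s+t})\subset F_s\otimes F_t$ for all $s,t>0$. *)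

theory Defs
  imports "HOL-Analysis.Analysis"
begin

text \<open>Concrete model of separable complex Hilbert spaces: every separable Hilbert space
is unitarily equivalent to l2(I) for a countable index set I.  The Hilbert tensor
product l2(I) (x) l2(J) is l2(I x J), with elementary tensors x (x) y = (i,j) |-> x i * y j.\<close>

definition l2 :: "'a set \<Rightarrow> ('a \<Rightarrow> complex) set" where
  "l2 I = {f. (\<forall>i. i \<notin> I \<longrightarrow> f i = 0) \<and> (\<lambda>i. (cmod (f i))\<^sup>2) summable_on UNIV}"

definition l2_inner :: "('a \<Rightarrow> complex) \<Rightarrow> ('a \<Rightarrow> complex) \<Rightarrow> complex" where
  "l2_inner f g = (\<Sum>\<^sub>\<infinity>i. cnj (f i) * g i)"

definition l2_dist :: "('a \<Rightarrow> complex) \<Rightarrow> ('a \<Rightarrow> complex) \<Rightarrow> real" where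
  "l2_dist f g = sqrt (\<Sum>\<^sub>\<infinity>i. (cmod (f i - g i))\<^sup>2)"

definition closed_subspace :: "'a set \<Rightarrow> ('a \<Rightarrow> complex) set \<Rightarrow> bool" where
  "closed_subspace I V \<longleftrightarrow> V \<subseteq> l2 I \<and> (\<lambda>_. 0) \<in> V
     \<and> (\<forall>f\<in>V. \<forall>g\<in>V. (\<lambda>i. f i + g i) \<in> V) \<and> (\<forall>c::complex. \<forall>f\<in>V. (\<lambda>i. c * f i) \<in> V)
     \<and> (\<forall>X f. (\<forall>n. X n \<in> V) \<and> f \<in> l2 I \<and> (\<lambda>n. l2_dist (X n) f) \<longlonglongrightarrow> 0 \<longrightarrow> f \<in> V)"

definition cspan :: "'a set \<Rightarrow> ('a \<Rightarrow> complex) set \<Rightarrow> ('a \<Rightarrow> complex) set" where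
  "cspan I S = \<Inter>{V. closed_subspace I V \<and> S \<subseteq> V}"

definition ocomp :: "'a set \<Rightarrow> ('a \<Rightarrow> complex) set \<Rightarrow> ('a \<Rightarrow> complex) set" where
  "ocomp I W = {x \<in> l2 I. \<forall>y\<in>W. l2_inner y x = 0}"

definition tens :: "('a \<Rightarrow> complex) \<Rightarrow> ('b \<Rightarrow> complex) \<Rightarrow> ('a \<times> 'b \<Rightarrow> complex)" where
  "tens x y = (\<lambda>(i, j). x i * y j)"

definition tensor_sub :: "'a set \<Rightarrow> 'b set \<Rightarrow> ('a \<Rightarrow> complex) set \<Rightarrow> ('b \<Rightarrow> complex) set
    \<Rightarrow> ('a \<times> 'b \<Rightarrow> complex) set" where
  "tensor_sub I J V W = cspan (I \<times> J) {tens x y | x y. x \<in> V \<and> y \<in> W}"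

definition unitary_l2 :: "'a set \<Rightarrow> 'b set \<Rightarrow> (('a \<Rightarrow> complex) \<Rightarrow> ('b \<Rightarrow> complex)) \<Rightarrow> bool" where
  "unitary_l2 I J U \<longleftrightarrow> U ` l2 I = l2 J
     \<and> (\<forall>f\<in>l2 I. \<forall>g\<in>l2 I. U (\<lambda>i. f i + g i) = (\<lambda>j. U f j + U g j))
     \<and> (\<forall>c::complex. \<forall>f\<in>l2 I. U (\<lambda>i. c * f i) = (\<lambda>j. c * U f j))
     \<and> (\<forall>f\<in>l2 I. \<forall>g\<in>l2 I. l2_inner (U f) (U g) = l2_inner f g)"

text \<open>Operators  U (x) 1  and  1 (x) U  on l2(I x L), resp. l2(L x I), acting slice-wise.\<close>
definition tens_left :: "(('a \<Rightarrow> complex) \<Rightarrow> ('b \<Rightarrow> complex)) \<Rightarrow> ('a \<times> 'c \<Rightarrow> complex) \<Rightarrow> ('b \<times> 'c \<Rightarrow> complex)" where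
  "tens_left U f = (\<lambda>(j, l). U (\<lambda>i. f (i, l)) j)"

definition tens_right :: "(('a \<Rightarrow> complex) \<Rightarrow> ('b \<Rightarrow> complex)) \<Rightarrow> ('c \<times> 'a \<Rightarrow> complex) \<Rightarrow> ('c \<times> 'b \<Rightarrow> complex)" where
  "tens_right U f = (\<lambda>(l, j). U (\<lambda>i. f (l, i)) j)"

text \<open>Product system (up to the measurability requirement): E_t = l2(I t) with I t countable,
unitaries B s t : E_(s+t) -> E_s (x) E_t = l2(I s x I t), associative up to the canonical
reassociation of coordinates.\<close>
definition product_system :: "(real \<Rightarrow> 'a set) \<Rightarrow> (real \<Rightarrow> real \<Rightarrow> ('a \<Rightarrow> complex) \<Rightarrow> ('a \<times> 'a \<Rightarrow> complex)) \<Rightarrow> bool" where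
  "product_system I B \<longleftrightarrow>
     (\<forall>t>0. countable (I t))
   \<and> (\<forall>s>0. \<forall>t>0. unitary_l2 (I (s + t)) (I s \<times> I t) (B s t))
   \<and> (\<forall>r>0. \<forall>s>0. \<forall>t>0. \<forall>f \<in> l2 (I (r + s + t)). \<forall>a b c.
        tens_left (B r s) (B (r + s) t f) ((a, b), c)
          = tens_right (B s t) (B r (s + t) f) (a, (b, c)))"

definition inclusion_subsystem :: "(real \<Rightarrow> 'a set) \<Rightarrow> (real \<Rightarrow> real \<Rightarrow> ('a \<Rightarrow> complex) \<Rightarrow> ('a \<times> 'a \<Rightarrow> complex))
    \<Rightarrow> (real \<Rightarrow> ('a \<Rightarrow> complex) set) \<Rightarrow> bool" where
  "inclusion_subsystem I B F \<longleftrightarrow>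
     (\<forall>t>0. closed_subspace (I t) (F t))
   \<and> (\<forall>s>0. \<forall>t>0. B s t ` F (s + t) \<subseteq> tensor_sub (I s) (I t) (F s) (F t))"

definition Ftilde :: "(real \<Rightarrow> 'a set) \<Rightarrow> (real \<Rightarrow> real \<Rightarrow> ('a \<Rightarrow> complex) \<Rightarrow> ('a \<times> 'a \<Rightarrow> complex))
    \<Rightarrow> (real \<Rightarrow> ('a \<Rightarrow> complex) set) \<Rightarrow> real \<Rightarrow> ('a \<Rightarrow> complex) set" where
  "Ftilde I B F t = cspan (I t)
     {z \<in> l2 (I t). \<exists>r x y. 0 < r \<and> r < t \<and> x \<in> ocomp (I r) (F r)
          \<and> y \<in> ocomp (I (t - r)) (F (t - r)) \<and> B r (t - r) z = tens x y}"

definition Fprime :: "(real \<Rightarrow> 'a set) \<Rightarrow> (real \<Rightarrow> real \<Rightarrow> ('a \<Rightarrow> complex) \<Rightarrow> ('a \<times> 'a \<Rightarrow> complex))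
    \<Rightarrow> (real \<Rightarrow> ('a \<Rightarrow> complex) set) \<Rightarrow> real \<Rightarrow> ('a \<Rightarrow> complex) set" where
  "Fprime I B F t = ocomp (I t) (Ftilde I B F t)"

end

theory Submission
  imports Defs
begin


definition SQ :: "('a \<Rightarrow> complex) \<Rightarrow> bool" where
  "SQ f \<longleftrightarrow> (\<lambda>i. (cmod (f i))\<^sup>2) summable_on UNIV"

lemma SQ_0[simp]: "SQ (\<lambda>_. 0)" by (simp add: SQ_def)

lemma SQ_add: assumes "SQ f" "SQ g" shows "SQ (\<lambda>i. f i + g i)"
  unfolding SQ_def
proof (rule summable_on_comparison_test)
  show "(\<lambda>i. 2 * (cmod (f i))\<^sup>2 + 2 * (cmod (g i))\<^sup>2) summable_on UNIV"
    using assms unfolding SQ_def by (intro summable_on_add summable_on_cmult_right)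
  fix i
  have "cmod (f i + g i) \<le> cmod (f i) + cmod (g i)" by (rule norm_triangle_ineq)
  hence "(cmod (f i + g i))\<^sup>2 \<le> (cmod (f i) + cmod (g i))\<^sup>2" by (simp add: power_mono)
  also have "\<dots> \<le> 2 * (cmod (f i))\<^sup>2 + 2 * (cmod (g i))\<^sup>2"
    using sum_squares_bound[of "cmod (f i)" "cmod (g i)"] by (simp add: power2_sum)
  finally show "(cmod (f i + g i))\<^sup>2 \<le> 2 * (cmod (f i))\<^sup>2 + 2 * (cmod (g i))\<^sup>2" .
qed simp

lemma SQ_scale: assumes "SQ f" shows "SQ (\<lambda>i. c * f i)"
proof -
  have "(\<lambda>i. (cmod c)\<^sup>2 * (cmod (f i))\<^sup>2) summable_on UNIV"
    using assms unfolding SQ_def by (intro summable_on_cmult_right)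
  thus ?thesis unfolding SQ_def by (simp add: norm_mult power_mult_distrib)
qed

lemma SQ_uminus: assumes "SQ f" shows "SQ (\<lambda>i. - f i)"
  using assms by (simp add: SQ_def)

lemma SQ_diff: assumes "SQ f" "SQ g" shows "SQ (\<lambda>i. f i - g i)"
  using SQ_add[OF assms(1) SQ_uminus[OF assms(2)]] by simp

lemma prod_le_sq_sum: fixes x y :: real assumes "0 \<le> x" "0 \<le> y" shows "x * y \<le> x\<^sup>2 + y\<^sup>2"
  using sum_squares_bound[of x y] mult_nonneg_nonneg[OF assms] by linarith

lemma SQ_inner_summable: assumes "SQ f" "SQ g"
  shows "(\<lambda>i. cnj (f i) * g i) summable_on UNIV"
proof -
  have "(\<lambda>i. norm (cnj (f i) * g i)) summable_on UNIV"
  proof (rule Infinite_Sum.abs_summable_on_comparison_test')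
    show "(\<lambda>i. (cmod (f i))\<^sup>2 + (cmod (g i))\<^sup>2) summable_on UNIV"
      using assms unfolding SQ_def by (intro summable_on_add)
    fix i
    show "norm (cnj (f i) * g i) \<le> (cmod (f i))\<^sup>2 + (cmod (g i))\<^sup>2"
      unfolding norm_mult complex_mod_cnj by (rule prod_le_sq_sum) auto
  qed
  thus ?thesis using summable_on_iff_abs_summable_on_complex by blast
qed

lemma l2_SQ: "f \<in> l2 I \<Longrightarrow> SQ f" by (simp add: l2_def SQ_def)
lemma l2_iff: "f \<in> l2 I \<longleftrightarrow> SQ f \<and> (\<forall>i. i \<notin> I \<longrightarrow> f i = 0)" by (auto simp: l2_def SQ_def)

lemma l2_inner_add_left: "SQ f \<Longrightarrow> SQ g \<Longrightarrow> SQ h \<Longrightarrow>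
   l2_inner (\<lambda>i. f i + g i) h = l2_inner f h + l2_inner g h"
  unfolding l2_inner_def by (simp add: distrib_right infsum_add SQ_inner_summable)

lemma l2_inner_add_right: "SQ f \<Longrightarrow> SQ g \<Longrightarrow> SQ h \<Longrightarrow>
   l2_inner h (\<lambda>i. f i + g i) = l2_inner h f + l2_inner h g"
  unfolding l2_inner_def by (simp add: distrib_left infsum_add SQ_inner_summable)

lemma l2_inner_scale_right: "l2_inner f (\<lambda>i. c * g i) = c * l2_inner f g"
  unfolding l2_inner_def
  by (subst infsum_cmult_right'[symmetric]) (simp add: mult.left_commute)

lemma l2_inner_scale_left: "l2_inner (\<lambda>i. c * f i) g = cnj c * l2_inner f g"
  unfolding l2_inner_def
  by (subst infsum_cmult_right'[symmetric]) (simp add: mult.assoc)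

lemma l2_inner_cnj: "l2_inner g f = cnj (l2_inner f g)"
  unfolding l2_inner_def by (subst infsum_cnj[symmetric]) (simp add: mult.commute)

lemma cnj_mult_self: "cnj z * z = complex_of_real ((cmod z)\<^sup>2)"
  by (metis complex_norm_square mult.commute)

lemma l2_inner_self: assumes "SQ f" shows "l2_inner f f = of_real (\<Sum>\<^sub>\<infinity>i. (cmod (f i))\<^sup>2)"
proof -
  have "l2_inner f f = (\<Sum>\<^sub>\<infinity>i. of_real ((cmod (f i))\<^sup>2))"
    unfolding l2_inner_def by (intro infsum_cong) (rule cnj_mult_self)
  also have "\<dots> = of_real (\<Sum>\<^sub>\<infinity>i. (cmod (f i))\<^sup>2)"
    using assms unfolding SQ_def by (intro infsumI has_sum_of_real has_sum_infsum)
  finally show ?thesis .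
qed

lemma l2_inner_self_eq0: assumes "SQ f" "l2_inner f f = 0" shows "f = (\<lambda>_. 0)"
proof
  fix i
  have "(\<Sum>\<^sub>\<infinity>i. (cmod (f i))\<^sup>2) = 0" using assms l2_inner_self[of f] by simp
  hence "(cmod (f i))\<^sup>2 = 0"
    by (intro nonneg_infsum_le_0D[of _ UNIV]) (use assms(1) in \<open>auto simp: SQ_def\<close>)
  thus "f i = 0" by simp
qed




typedef 'a sq = "{f :: 'a \<Rightarrow> complex. SQ f}" morphisms vec sqv
  by (rule exI[of _ "\<lambda>_. 0"]) simp

setup_lifting type_definition_sq

instantiation sq :: (type) real_vector
begin
lift_definition zero_sq :: "'a sq" is "\<lambda>_. 0" by simp
lift_definition plus_sq :: "'a sq \<Rightarrow> 'a sq \<Rightarrow> 'a sq" is "\<lambda>f g i. f i + g i" by (rule SQ_add)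
lift_definition uminus_sq :: "'a sq \<Rightarrow> 'a sq" is "\<lambda>f i. - f i" by (rule SQ_uminus)
lift_definition minus_sq :: "'a sq \<Rightarrow> 'a sq \<Rightarrow> 'a sq" is "\<lambda>f g i. f i - g i" by (rule SQ_diff)
lift_definition scaleR_sq :: "real \<Rightarrow> 'a sq \<Rightarrow> 'a sq" is "\<lambda>r f i. complex_of_real r * f i"
  by (rule SQ_scale)
instance
proof
  fix x y z :: "'a sq" and r s :: real
  show "x + y + z = x + (y + z)" by transfer (simp add: add.assoc)
  show "x + y = y + x" by transfer (simp add: add.commute)
  show "0 + x = x" by transfer simp
  show "- x + x = 0" by transfer simp
  show "x - y = x + - y" by transfer simp
  show "r *\<^sub>R (x + y) = r *\<^sub>R x + r *\<^sub>R y" by transfer (simp add: distrib_left)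
  show "(r + s) *\<^sub>R x = r *\<^sub>R x + s *\<^sub>R x" by transfer (simp add: distrib_right)
  show "r *\<^sub>R s *\<^sub>R x = (r * s) *\<^sub>R x" by transfer (simp add: mult.assoc)
  show "1 *\<^sub>R x = x" by transfer simp
qed
end

instantiation sq :: (type) real_inner
begin
lift_definition inner_sq :: "'a sq \<Rightarrow> 'a sq \<Rightarrow> real" is "\<lambda>f g. Re (l2_inner f g)" .
definition norm_sq :: "'a sq \<Rightarrow> real" where "norm_sq x = sqrt (inner x x)"
definition sgn_sq :: "'a sq \<Rightarrow> 'a sq" where "sgn_sq x = x /\<^sub>R norm x"
definition dist_sq :: "'a sq \<Rightarrow> 'a sq \<Rightarrow> real" where "dist_sq x y = norm (x - y)"
definition uniformity_sq :: "('a sq \<times> 'a sq) filter" where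
  "uniformity_sq = (INF e\<in>{0<..}. principal {(x, y). dist x y < e})"
definition open_sq :: "'a sq set \<Rightarrow> bool" where
  "open_sq U = (\<forall>x\<in>U. eventually (\<lambda>(x', y). x' = x \<longrightarrow> y \<in> U) uniformity)"
instance
proof
  fix x y z :: "'a sq" and r s :: real
  show "sgn x = inverse (norm x) *\<^sub>R x" by (simp add: sgn_sq_def)
  show "dist x y = norm (x - y)" by (simp add: dist_sq_def)
  show "(uniformity :: ('a sq \<times> 'a sq) filter) = (INF e\<in>{0<..}. principal {(x, y). dist x y < e})"
    by (simp add: uniformity_sq_def)
  show "open U = (\<forall>x\<in>U. \<forall>\<^sub>F (x', y) in uniformity. x' = x \<longrightarrow> y \<in> U)" for U :: "'a sq set"
    by (simp add: open_sq_def)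
  show "inner x y = inner y x" by transfer (metis complex_cnj_cancel_iff cnj.sel(1) l2_inner_cnj)
  show "inner (x + y) z = inner x z + inner y z" by transfer (simp add: l2_inner_add_left)
  show "inner (r *\<^sub>R x) y = r * inner x y" by transfer (simp add: l2_inner_scale_left)
  show "0 \<le> inner x x" by transfer (simp add: l2_inner_self infsum_nonneg)
  show "(inner x x = 0) = (x = 0)"
  proof transfer
    fix f :: "'a \<Rightarrow> complex" assume f: "SQ f"
    show "(Re (l2_inner f f) = 0) = (f = (\<lambda>_. 0))"
    proof
      assume "Re (l2_inner f f) = 0"
      hence "l2_inner f f = 0" using l2_inner_self[OF f] by simp
      thus "f = (\<lambda>_. 0)" by (rule l2_inner_self_eq0[OF f])
    qed (simp add: l2_inner_def)
  qed
  show "norm x = sqrt (inner x x)" by (simp add: norm_sq_def)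
qed
end

lemma vec_0[simp]: "vec 0 = (\<lambda>_. 0)" by transfer simp
lemma vec_add: "vec (x + y) = (\<lambda>i. vec x i + vec y i)" by transfer simp
lemma vec_diff: "vec (x - y) = (\<lambda>i. vec x i - vec y i)" by transfer simp
lemma vec_scaleR: "vec (r *\<^sub>R x) = (\<lambda>i. of_real r * vec x i)" by transfer simp
lemma SQ_vec[simp]: "SQ (vec x)" using vec by auto
lemma vec_sqv: "SQ f \<Longrightarrow> vec (sqv f) = f" by (simp add: sqv_inverse)
lemma inner_sq_def': "inner x y = Re (l2_inner (vec x) (vec y))" by transfer simp

lemma norm_sq_sq: "(norm x)\<^sup>2 = (\<Sum>\<^sub>\<infinity>i. (cmod (vec x i))\<^sup>2)"
  by (simp add: power2_norm_eq_inner inner_sq_def' l2_inner_self)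

lemma norm_sq_eq: "norm x = sqrt (\<Sum>\<^sub>\<infinity>i. (cmod (vec x i))\<^sup>2)"
  by (metis norm_sq_sq norm_ge_zero real_sqrt_unique)

lemma l2_dist_norm: "SQ f \<Longrightarrow> SQ g \<Longrightarrow> l2_dist f g = norm (sqv f - sqv g)"
  by (simp add: l2_dist_def norm_sq_eq vec_diff vec_sqv)

lemma coord_le_norm: "cmod (vec x i) \<le> norm x"
proof -
  have "(cmod (vec x i))\<^sup>2 \<le> (\<Sum>\<^sub>\<infinity>i. (cmod (vec x i))\<^sup>2)"
    using finite_sum_le_infsum[of "\<lambda>i. (cmod (vec x i))\<^sup>2" UNIV "{i}"]
    using SQ_vec[of x] unfolding SQ_def by simp
  thus ?thesis using norm_sq_sq[of x] by (metis norm_ge_zero power2_le_imp_le)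
qed

lemma coord_Cauchy: assumes "Cauchy X" shows "Cauchy (\<lambda>n. vec (X n) i)"
proof (rule metric_CauchyI)
  fix e :: real assume "e > 0"
  then obtain M where M: "\<forall>m\<ge>M. \<forall>n\<ge>M. dist (X m) (X n) < e" using assms metric_CauchyD by blast
  show "\<exists>M. \<forall>m\<ge>M. \<forall>n\<ge>M. dist (vec (X m) i) (vec (X n) i) < e"
  proof (intro exI allI impI)
    fix m n assume "M \<le> m" "M \<le> n"
    have "dist (vec (X m) i) (vec (X n) i) = cmod (vec (X m - X n) i)"
      by (simp add: dist_norm vec_diff)
    also have "\<dots> \<le> dist (X m) (X n)" unfolding dist_norm by (rule coord_le_norm)
    also have "\<dots> < e" using M \<open>M \<le> m\<close> \<open>M \<le> n\<close> by blast
    finally show "dist (vec (X m) i) (vec (X n) i) < e" .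
  qed
qed

instance sq :: (type) complete_space
proof
  fix X :: "nat \<Rightarrow> 'a sq" assume C: "Cauchy X"
  define f where "f i = lim (\<lambda>n. vec (X n) i)" for i
  have lf: "(\<lambda>n. vec (X n) i) \<longlonglongrightarrow> f i" for i
    unfolding f_def using coord_Cauchy[OF C, of i] by (simp add: Cauchy_convergent_iff convergent_LIMSEQ_iff)
  have key: "\<exists>N. \<forall>n\<ge>N. SQ (\<lambda>i. vec (X n) i - f i) \<and> (\<Sum>\<^sub>\<infinity>i. (cmod (vec (X n) i - f i))\<^sup>2) \<le> e\<^sup>2"
    if "e > 0" for e :: real
  proof -
    obtain N where N: "\<forall>m\<ge>N. \<forall>n\<ge>N. dist (X m) (X n) < e" using C metric_CauchyD \<open>e > 0\<close> by blast
    have "SQ (\<lambda>i. vec (X n) i - f i) \<and> (\<Sum>\<^sub>\<infinity>i. (cmod (vec (X n) i - f i))\<^sup>2) \<le> e\<^sup>2" if "n \<ge> N" for n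
    proof -
      have fin: "(\<Sum>i\<in>F. (cmod (vec (X n) i - f i))\<^sup>2) \<le> e\<^sup>2" if "finite F" for F
      proof (rule LIMSEQ_le_const2)
        show "(\<lambda>m. \<Sum>i\<in>F. (cmod (vec (X n) i - vec (X m) i))\<^sup>2) \<longlonglongrightarrow> (\<Sum>i\<in>F. (cmod (vec (X n) i - f i))\<^sup>2)"
          by (intro tendsto_sum tendsto_power tendsto_norm tendsto_diff tendsto_const lf)
        show "\<exists>M. \<forall>m\<ge>M. (\<Sum>i\<in>F. (cmod (vec (X n) i - vec (X m) i))\<^sup>2) \<le> e\<^sup>2"
        proof (intro exI allI impI)
          fix m assume "N \<le> m"
          have "(\<Sum>i\<in>F. (cmod (vec (X n) i - vec (X m) i))\<^sup>2) = (\<Sum>i\<in>F. (cmod (vec (X n - X m) i))\<^sup>2)"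
            by (simp add: vec_diff)
          also have "\<dots> \<le> (\<Sum>\<^sub>\<infinity>i. (cmod (vec (X n - X m) i))\<^sup>2)"
            using SQ_vec[of "X n - X m"] that unfolding SQ_def by (intro finite_sum_le_infsum) auto
          also have "\<dots> = (norm (X n - X m))\<^sup>2" by (simp add: norm_sq_sq)
          also have "\<dots> \<le> e\<^sup>2"
            using N \<open>N \<le> m\<close> \<open>n \<ge> N\<close> by (intro power_mono) (auto simp: dist_norm less_imp_le)
          finally show "(\<Sum>i\<in>F. (cmod (vec (X n) i - vec (X m) i))\<^sup>2) \<le> e\<^sup>2" .
        qed
      qed
      have sm: "(\<lambda>i. (cmod (vec (X n) i - f i))\<^sup>2) summable_on UNIV"
        by (rule nonneg_bdd_above_summable_on) (auto intro!: bdd_aboveI[where M="e\<^sup>2"] fin)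
      moreover have "(\<Sum>\<^sub>\<infinity>i. (cmod (vec (X n) i - f i))\<^sup>2) \<le> e\<^sup>2"
        using sm fin by (intro infsum_le_finite_sums) auto
      ultimately show ?thesis by (simp add: SQ_def)
    qed
    thus ?thesis by blast
  qed
  obtain N1 where "\<forall>n\<ge>N1. SQ (\<lambda>i. vec (X n) i - f i)" using key[of 1] by auto
  hence "SQ (\<lambda>i. vec (X N1) i - f i)" by simp
  hence "SQ (\<lambda>i. vec (X N1) i - (vec (X N1) i - f i))" by (rule SQ_diff[OF SQ_vec])
  hence SQf: "SQ f" by simp
  have "X \<longlonglongrightarrow> sqv f"
  proof (rule LIMSEQ_I)
    fix r :: real assume "r > 0"
    then obtain N where N: "\<forall>n\<ge>N. SQ (\<lambda>i. vec (X n) i - f i) \<and> (\<Sum>\<^sub>\<infinity>i. (cmod (vec (X n) i - f i))\<^sup>2) \<le> (r/2)\<^sup>2"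
      using key[of "r/2"] by auto
    show "\<exists>no. \<forall>n\<ge>no. norm (X n - sqv f) < r"
    proof (intro exI allI impI)
      fix n assume "N \<le> n"
      have "norm (X n - sqv f) = sqrt (\<Sum>\<^sub>\<infinity>i. (cmod (vec (X n) i - f i))\<^sup>2)"
        by (simp add: norm_sq_eq vec_diff vec_sqv[OF SQf])
      also have "\<dots> \<le> sqrt ((r/2)\<^sup>2)" using N \<open>N \<le> n\<close> by (intro real_sqrt_le_mono) auto
      also have "\<dots> < r" using \<open>r > 0\<close> by simp
      finally show "norm (X n - sqv f) < r" .
    qed
  qed
  thus "convergent X" by (auto simp: convergent_def)
qed




lemma parallelogram:
  fixes x y :: "'v::real_inner"
  shows "(norm (x + y))\<^sup>2 + (norm (x - y))\<^sup>2 = 2 * (norm x)\<^sup>2 + 2 * (norm y)\<^sup>2"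
  by (simp add: power2_norm_eq_inner inner_add_left inner_add_right inner_diff_left inner_diff_right inner_commute)

lemma proj_exists:
  fixes a :: "'v::{real_inner,complete_space}"
  assumes cl: "closed S" and ne: "S \<noteq> {}"
    and add: "\<And>x y. x\<in>S \<Longrightarrow> y\<in>S \<Longrightarrow> x + y \<in> S"
    and sc: "\<And>c x. x \<in> S \<Longrightarrow> c *\<^sub>R x \<in> S"
  shows "\<exists>p\<in>S. \<forall>y\<in>S. inner (a - p) y = 0"
proof -
  define d where "d = infdist a S"
  have d0: "0 \<le> d" by (simp add: d_def infdist_nonneg)
  have dle: "d \<le> norm (a - x)" if "x \<in> S" for x
    using infdist_le[OF that, of a] by (simp add: d_def dist_norm)
  have "\<exists>y\<in>S. dist a y < d + 1 / (real n + 1)" for n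
  proof -
    have "(INF x\<in>S. dist a x) < d + 1 / (real n + 1)" 
      using infdist_notempty[OF ne, of a] d_def by (simp add: add_pos_pos)
    thus ?thesis by (subst (asm) cINF_less_iff) (use ne in \<open>auto intro: bdd_belowI[where m=0]\<close>)
  qed
  then obtain y where yS: "\<And>n. y n \<in> S" and yd: "\<And>n. norm (a - y n) < d + 1 / (real n + 1)"
    unfolding dist_norm by metis
  have bound: "(norm (y m - y n))\<^sup>2 \<le> 4 * (2 * d + 1) / (real N + 1)"
    if "N \<le> m" "N \<le> n" for N m n
  proof -
    define \<delta> where "\<delta> = 1 / (real N + 1)"
    have \<delta>0: "0 < \<delta>" "\<delta> \<le> 1" by (auto simp: \<delta>_def field_simps)
    have em: "1 / (real m + 1) \<le> \<delta>" "1 / (real n + 1) \<le> \<delta>"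
      using that by (auto simp: \<delta>_def frac_le)
    have mid: "(1/2) *\<^sub>R (y m + y n) \<in> S" using yS by (intro sc add)
    have "(norm ((a - y m) + (a - y n)))\<^sup>2 + (norm ((a - y m) - (a - y n)))\<^sup>2
          = 2 * (norm (a - y m))\<^sup>2 + 2 * (norm (a - y n))\<^sup>2" by (rule parallelogram)
    moreover have "(a - y m) + (a - y n) = 2 *\<^sub>R (a - (1/2) *\<^sub>R (y m + y n))"
      by (simp add: algebra_simps scaleR_2)
    moreover have "(a - y m) - (a - y n) = - (y m - y n)" by simp
    ultimately have eq: "(norm (y m - y n))\<^sup>2 = 2 * (norm (a - y m))\<^sup>2 + 2 * (norm (a - y n))\<^sup>2
        - 4 * (norm (a - (1/2) *\<^sub>R (y m + y n)))\<^sup>2"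
      by (simp only: norm_scaleR norm_minus_cancel power_mult_distrib) simp
    have l1: "d\<^sup>2 \<le> (norm (a - (1/2) *\<^sub>R (y m + y n)))\<^sup>2" using dle[OF mid] d0 by (simp add: power_mono)
    have l2: "(norm (a - y m))\<^sup>2 \<le> (d + \<delta>)\<^sup>2"
      using yd[of m] em d0 by (intro power_mono) auto
    have l3: "(norm (a - y n))\<^sup>2 \<le> (d + \<delta>)\<^sup>2"
      using yd[of n] em d0 by (intro power_mono) auto
    have "(norm (y m - y n))\<^sup>2 \<le> 4 * ((d + \<delta>)\<^sup>2 - d\<^sup>2)"
    proof -
      define A where "A = (norm (y m - y n))\<^sup>2"
      define B where "B = (norm (a - y m))\<^sup>2"
      define C where "C = (norm (a - y n))\<^sup>2"
      define D where "D = (norm (a - (1/2) *\<^sub>R (y m + y n)))\<^sup>2"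
      define E where "E = (d + \<delta>)\<^sup>2"
      define G where "G = d\<^sup>2"
      have "A = 2 * B + 2 * C - 4 * D" "G \<le> D" "B \<le> E" "C \<le> E"
        using eq l1 l2 l3 unfolding A_def B_def C_def D_def E_def G_def by auto
      hence "A \<le> 4 * E - 4 * G" by linarith
      thus ?thesis unfolding A_def E_def G_def by (simp add: right_diff_distrib)
    qed
    also have "\<dots> = 4 * \<delta> * (2 * d + \<delta>)" by (simp add: power2_eq_square algebra_simps)
    also have "\<dots> \<le> 4 * \<delta> * (2 * d + 1)" using \<delta>0 d0 by (intro mult_left_mono) auto
    also have "\<dots> = 4 * (2 * d + 1) / (real N + 1)" by (simp add: \<delta>_def)
    finally show ?thesis .
  qed
  have "Cauchy y"
  proof (rule metric_CauchyI)
    fix e :: real assume "0 < e"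
    obtain N :: nat where N: "4 * (2 * d + 1) / e\<^sup>2 < real N + 1"
      using reals_Archimedean2[of "4 * (2 * d + 1) / e\<^sup>2"] by (metis add.commute add_strict_increasing zero_less_one less_imp_le)
    have "4 * (2 * d + 1) / (real N + 1) < e\<^sup>2"
      using N \<open>0 < e\<close> d0 by (simp add: field_simps)
    hence "\<forall>m\<ge>N. \<forall>n\<ge>N. (norm (y m - y n))\<^sup>2 < e\<^sup>2" using bound by (meson le_less_trans)
    hence "\<forall>m\<ge>N. \<forall>n\<ge>N. dist (y m) (y n) < e"
      using \<open>0 < e\<close> unfolding dist_norm by (meson power_less_imp_less_base less_imp_le)
    thus "\<exists>M. \<forall>m\<ge>M. \<forall>n\<ge>M. dist (y m) (y n) < e" by blast
  qed
  then obtain p where yp: "y \<longlonglongrightarrow> p" by (auto simp: Cauchy_convergent_iff convergent_def)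
  have pS: "p \<in> S" using cl yS yp closed_sequential_limits by blast
  have "norm (a - p) \<le> d"
  proof (rule LIMSEQ_le[of "\<lambda>n. norm (a - y n)" _ "\<lambda>n. d + 1 / (real n + 1)"])
    show "(\<lambda>n. norm (a - y n)) \<longlonglongrightarrow> norm (a - p)" by (intro tendsto_intros yp)
    have "(\<lambda>n. 1 / (real n + 1)) \<longlonglongrightarrow> 0" using LIMSEQ_Suc[OF lim_inverse_n'] by (simp add: add.commute)
    thus "(\<lambda>n. d + 1 / (real n + 1)) \<longlonglongrightarrow> d" using tendsto_add[OF tendsto_const[of d]] by fastforce
    show "\<exists>N. \<forall>n\<ge>N. norm (a - y n) \<le> d + 1 / (real n + 1)" using yd less_imp_le by blast
  qed
  hence minp: "norm (a - p) \<le> norm (a - x)" if "x \<in> S" for x using dle[OF that] by linarith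
  have "inner (a - p) z = 0" if zS: "z \<in> S" for z
  proof -
    define c where "c = inner (a - p) z"
    define N where "N = (norm z)\<^sup>2"
    define t where "t = c / (N + 1)"
    have N0: "0 \<le> N" by (simp add: N_def)
    have "p + t *\<^sub>R z \<in> S" using pS zS by (intro add sc)
    hence "(norm (a - p))\<^sup>2 \<le> (norm (a - (p + t *\<^sub>R z)))\<^sup>2" using minp by (simp add: power_mono)
    also have "\<dots> = (norm (a - p))\<^sup>2 - 2 * t * c + t\<^sup>2 * N"
      unfolding N_def c_def power2_norm_eq_inner
      by (simp add: inner_diff_left inner_diff_right inner_add_left inner_add_right
          inner_commute power2_eq_square algebra_simps)
    finally have "2 * t * c \<le> t\<^sup>2 * N" by simp
    hence h: "2 * t * c * ((N + 1) * (N + 1)) \<le> t\<^sup>2 * N * ((N + 1) * (N + 1))"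
      by (rule mult_right_mono) (use N0 in simp)
    have tN: "t * (N + 1) = c" using N0 by (simp add: t_def)
    have e1: "2 * t * c * ((N + 1) * (N + 1)) = 2 * (c * c) * N + 2 * (c * c)"
      by (simp add: algebra_simps tN[symmetric])
    have e2: "t\<^sup>2 * N * ((N + 1) * (N + 1)) = (c * c) * N"
      by (simp add: power2_eq_square algebra_simps tN[symmetric])
    have "2 * (c * c) * N + 2 * (c * c) \<le> (c * c) * N" using h e1 e2 by simp
    moreover have "0 \<le> (c * c) * N" using N0 by simp
    moreover have "0 \<le> c * c" by simp
    ultimately have "c * c = 0" by linarith
    thus ?thesis by (simp add: c_def)
  qed
  thus ?thesis using pS by blast
qed




lemma sqv_add: "SQ f \<Longrightarrow> SQ g \<Longrightarrow> sqv f + sqv g = sqv (\<lambda>i. f i + g i)"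
  by (simp add: plus_sq.abs_eq eq_onp_def)
lemma sqv_diff: "SQ f \<Longrightarrow> SQ g \<Longrightarrow> sqv f - sqv g = sqv (\<lambda>i. f i - g i)"
  by (simp add: minus_sq.abs_eq eq_onp_def)
lemma sqv_scaleR: "SQ f \<Longrightarrow> r *\<^sub>R sqv f = sqv (\<lambda>i. complex_of_real r * f i)"
  by (simp add: scaleR_sq.abs_eq eq_onp_def)
lemma inner_sqv: "SQ f \<Longrightarrow> SQ g \<Longrightarrow> inner (sqv f) (sqv g) = Re (l2_inner f g)"
  by (simp add: inner_sq_def' vec_sqv)

lemma l2_add: "f \<in> l2 I \<Longrightarrow> g \<in> l2 I \<Longrightarrow> (\<lambda>i. f i + g i) \<in> l2 I"
  by (simp add: l2_iff SQ_add)
lemma l2_scale: "f \<in> l2 I \<Longrightarrow> (\<lambda>i. c * f i) \<in> l2 I"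
  by (simp add: l2_iff SQ_scale)
lemma l2_diff: "f \<in> l2 I \<Longrightarrow> g \<in> l2 I \<Longrightarrow> (\<lambda>i. f i - g i) \<in> l2 I"
  by (simp add: l2_iff SQ_diff)
lemma l2_0: "(\<lambda>_. 0) \<in> l2 I" by (simp add: l2_iff)

lemma closed_subspace_l2: "closed_subspace I (l2 I)"
  by (simp add: closed_subspace_def l2_add l2_scale l2_0)

lemma coord_tendsto: assumes "x \<longlonglongrightarrow> l" shows "(\<lambda>n. vec (x n) i) \<longlonglongrightarrow> vec l i"
proof -
  have "(\<lambda>n. norm (x n - l)) \<longlonglongrightarrow> 0" using assms by (simp add: LIM_zero_iff tendsto_norm_zero_iff)
  moreover have "norm (vec (x n) i - vec l i) \<le> norm (x n - l)" for n
    using coord_le_norm[of "x n - l" i] by (simp add: vec_diff)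
  ultimately have "(\<lambda>n. vec (x n) i - vec l i) \<longlonglongrightarrow> 0"
    by (intro Lim_null_comparison[of "\<lambda>n. vec (x n) i - vec l i" "\<lambda>n. norm (x n - l)"]) (auto simp: always_eventually)
  thus ?thesis by (simp add: LIM_zero_iff)
qed

lemma l2_dist_tendsto: assumes "\<And>n. SQ (X n)" "SQ f" "(\<lambda>n. l2_dist (X n) f) \<longlonglongrightarrow> 0"
  shows "(\<lambda>n. sqv (X n)) \<longlonglongrightarrow> sqv f"
proof -
  have eq: "l2_dist (X n) f = norm (sqv (X n) - sqv f)" for n using assms(1,2) by (rule l2_dist_norm)
  have "(\<lambda>n. norm (sqv (X n) - sqv f)) \<longlonglongrightarrow> 0" using assms(3) unfolding eq .
  thus ?thesis by (simp add: tendsto_norm_zero_iff LIM_zero_iff)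
qed

lemma l2_inner_negi: "l2_inner f (\<lambda>j. - (\<i> * v j)) = - \<i> * l2_inner f v"
  using l2_inner_scale_right[of f "- \<i>" v] by simp

lemma inner_lim: assumes "\<And>n. SQ (X n)" "SQ f" "SQ v" "(\<lambda>n. l2_dist (X n) f) \<longlonglongrightarrow> 0"
  shows "(\<lambda>n. l2_inner (X n) v) \<longlonglongrightarrow> l2_inner f v"
proof -
  have lim: "(\<lambda>n. sqv (X n)) \<longlonglongrightarrow> sqv f" using l2_dist_tendsto assms by blast
  have SQv': "SQ (\<lambda>j. (- \<i>) * v j)" using assms(3) by (rule SQ_scale)
  have re: "(\<lambda>n. Re (l2_inner (X n) v)) \<longlonglongrightarrow> Re (l2_inner f v)"
    using tendsto_inner[OF lim tendsto_const[of "sqv v"]] assms by (simp add: inner_sqv)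
  have "(\<lambda>n. Re (l2_inner (X n) (\<lambda>j. (- \<i>) * v j))) \<longlonglongrightarrow> Re (l2_inner f (\<lambda>j. (- \<i>) * v j))"
    using tendsto_inner[OF lim tendsto_const[of "sqv (\<lambda>j. (- \<i>) * v j)"]] assms SQv' by (simp add: inner_sqv)
  hence im: "(\<lambda>n. Im (l2_inner (X n) v)) \<longlonglongrightarrow> Im (l2_inner f v)"
    by (simp add: l2_inner_negi)
  show ?thesis using re im by (simp add: tendsto_complex_iff)
qed

lemma orth_closed: assumes "v \<in> l2 I" shows "closed_subspace I {u \<in> l2 I. l2_inner u v = 0}"
  unfolding closed_subspace_def
proof (intro conjI allI impI ballI)
  show "(\<lambda>_. 0) \<in> {u \<in> l2 I. l2_inner u v = 0}" by (simp add: l2_0 l2_inner_def)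
  fix f g assume "f \<in> {u \<in> l2 I. l2_inner u v = 0}" "g \<in> {u \<in> l2 I. l2_inner u v = 0}"
  thus "(\<lambda>i. f i + g i) \<in> {u \<in> l2 I. l2_inner u v = 0}"
    using assms by (simp add: l2_add l2_inner_add_left[OF l2_SQ[of f I] l2_SQ[of g I] l2_SQ[of v I]])
next
  fix c :: complex and f assume "f \<in> {u \<in> l2 I. l2_inner u v = 0}"
  thus "(\<lambda>i. c * f i) \<in> {u \<in> l2 I. l2_inner u v = 0}" by (simp add: l2_scale l2_inner_scale_left)
next
  fix X f assume h: "(\<forall>n. X n \<in> {u \<in> l2 I. l2_inner u v = 0}) \<and> f \<in> l2 I \<and> (\<lambda>n. l2_dist (X n) f) \<longlonglongrightarrow> 0"
  hence "(\<lambda>n. l2_inner (X n) v) \<longlonglongrightarrow> l2_inner f v"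
    using assms by (intro inner_lim) (auto intro: l2_SQ)
  moreover have "(\<lambda>n. l2_inner (X n) v) = (\<lambda>_. 0)" using h by auto
  ultimately have "l2_inner f v = 0" using LIMSEQ_unique tendsto_const by metis
  thus "f \<in> {u \<in> l2 I. l2_inner u v = 0}" using h by simp
qed auto

lemma closed_subspace_Inter: assumes "\<And>V. V \<in> A \<Longrightarrow> closed_subspace I V" "A \<noteq> {}"
  shows "closed_subspace I (\<Inter>A)"
  unfolding closed_subspace_def
proof (intro conjI allI impI ballI)
  have c: "\<And>V. V \<in> A \<Longrightarrow> V \<subseteq> l2 I \<and> (\<lambda>_. 0) \<in> V
     \<and> (\<forall>f\<in>V. \<forall>g\<in>V. (\<lambda>i. f i + g i) \<in> V) \<and> (\<forall>c::complex. \<forall>f\<in>V. (\<lambda>i. c * f i) \<in> V)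
     \<and> (\<forall>X f. (\<forall>n. X n \<in> V) \<and> f \<in> l2 I \<and> (\<lambda>n. l2_dist (X n) f) \<longlonglongrightarrow> 0 \<longrightarrow> f \<in> V)"
    using assms(1) unfolding closed_subspace_def by blast
  show "\<Inter>A \<subseteq> l2 I" using c assms(2) by blast
  show "(\<lambda>_. 0) \<in> \<Inter>A" using c by blast
  show "(\<lambda>i. f i + g i) \<in> \<Inter>A" if "f \<in> \<Inter>A" "g \<in> \<Inter>A" for f g
    using c that by blast
  show "(\<lambda>i. c * f i) \<in> \<Inter>A" if "f \<in> \<Inter>A" for c f
    using c that by blast
  show "f \<in> \<Inter>A" if "(\<forall>n. X n \<in> \<Inter>A) \<and> f \<in> l2 I \<and> (\<lambda>n. l2_dist (X n) f) \<longlonglongrightarrow> 0" for X f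
  proof
    fix V assume "V \<in> A"
    thus "f \<in> V" using c[OF \<open>V \<in> A\<close>] that by blast
  qed
qed

lemma cspan_closed: assumes "S \<subseteq> l2 I" shows "closed_subspace I (cspan I S)"
  unfolding cspan_def using assms closed_subspace_l2
  by (intro closed_subspace_Inter) auto

lemma cspan_sup: "S \<subseteq> l2 I \<Longrightarrow> S \<subseteq> cspan I S"
  unfolding cspan_def by auto

lemma cspan_least: "closed_subspace I V \<Longrightarrow> S \<subseteq> V \<Longrightarrow> cspan I S \<subseteq> V"
  unfolding cspan_def by auto

lemma proj_l2: assumes M: "closed_subspace I M" and a: "a \<in> l2 I"
  shows "\<exists>p\<in>M. (\<lambda>i. a i - p i) \<in> ocomp I M"
proof -
  have Ml2: "M \<subseteq> l2 I" and M0: "(\<lambda>_. 0) \<in> M"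
    and Madd: "\<And>f g. f \<in> M \<Longrightarrow> g \<in> M \<Longrightarrow> (\<lambda>i. f i + g i) \<in> M"
    and Msc: "\<And>c f. f \<in> M \<Longrightarrow> (\<lambda>i. c * f i) \<in> M"
    and Mcl: "\<And>X f. (\<forall>n. X n \<in> M) \<Longrightarrow> f \<in> l2 I \<Longrightarrow> (\<lambda>n. l2_dist (X n) f) \<longlonglongrightarrow> 0 \<Longrightarrow> f \<in> M"
    using M unfolding closed_subspace_def by blast+
  have MSQ: "f \<in> M \<Longrightarrow> SQ f" for f using Ml2 l2_SQ by blast
  define S where "S = sqv ` M"
  have "closed S" unfolding closed_sequential_limits
  proof (intro allI impI)
    fix x l assume h: "(\<forall>n. x n \<in> S) \<and> x \<longlonglongrightarrow> l"
    have "\<forall>n. \<exists>g. g \<in> M \<and> x n = sqv g" using h unfolding S_def by blast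
    from choice[OF this] obtain g where g': "\<forall>n. g n \<in> M \<and> x n = sqv (g n)" by blast
    hence g: "\<And>n. g n \<in> M" "\<And>n. x n = sqv (g n)" by auto
    have vl: "vec l \<in> l2 I"
      unfolding l2_iff
    proof (intro conjI allI impI)
      fix i assume "i \<notin> I"
      have lim: "(\<lambda>n. vec (x n) i) \<longlonglongrightarrow> vec l i" using h by (intro coord_tendsto) simp
      have z: "vec (x n) i = 0" for n
      proof -
        have "g n \<in> l2 I" using g(1) Ml2 by blast
        hence "g n i = 0" using \<open>i \<notin> I\<close> unfolding l2_iff by blast
        thus ?thesis using g(2) vec_sqv[OF MSQ[OF g(1)]] by simp
      qed
      have "(\<lambda>n. vec (x n) i) = (\<lambda>_. 0)" using z by simp
      with lim have "(\<lambda>_. 0) \<longlonglongrightarrow> vec l i" by simp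
      from LIMSEQ_unique[OF tendsto_const this] show "vec l i = 0" by simp
    qed simp
    have "(\<lambda>n. l2_dist (g n) (vec l)) \<longlonglongrightarrow> 0"
    proof -
      have "(\<lambda>n. norm (x n - l)) \<longlonglongrightarrow> 0" using h by (simp add: LIM_zero_iff tendsto_norm_zero_iff)
      moreover have "l2_dist (g n) (vec l) = norm (x n - l)" for n
        using l2_dist_norm[OF MSQ[OF g(1)] SQ_vec[of l]] g(2) by (simp add: vec_inverse)
      ultimately show ?thesis by simp
    qed
    hence "vec l \<in> M" using Mcl g vl by blast
    thus "l \<in> S" unfolding S_def by (intro image_eqI[where x="vec l"]) (simp_all add: vec_inverse)
  qed
  note clS = this
  have neS: "S \<noteq> {}" using M0 S_def by blast
  have addS: "x + y \<in> S" if xyS: "x \<in> S" "y \<in> S" for x y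
  proof -
    obtain f g where fg: "f \<in> M" "g \<in> M" "x = sqv f" "y = sqv g" using xyS unfolding S_def by blast
    hence "x + y = sqv (\<lambda>i. f i + g i)" using sqv_add[OF MSQ[OF fg(1)] MSQ[OF fg(2)]] by simp
    moreover have "(\<lambda>i. f i + g i) \<in> M" using Madd fg by blast
    ultimately show ?thesis unfolding S_def by simp
  qed
  have scS: "c *\<^sub>R x \<in> S" if xS: "x \<in> S" for c x
  proof -
    obtain f where f: "f \<in> M" "x = sqv f" using xS unfolding S_def by blast
    hence "c *\<^sub>R x = sqv (\<lambda>i. complex_of_real c * f i)" using sqv_scaleR[OF MSQ[OF f(1)]] by simp
    moreover have "(\<lambda>i. complex_of_real c * f i) \<in> M" using Msc f by blast
    ultimately show ?thesis unfolding S_def by simp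
  qed
  obtain p' where p'S: "p' \<in> S" and orth: "\<forall>y\<in>S. inner (sqv a - p') y = 0"
    using proj_exists[of S "sqv a", OF clS neS addS scS] by blast
  obtain p where pM: "p \<in> M" and pp: "p' = sqv p" using p'S unfolding S_def by blast
  have aSQ: "SQ a" using a l2_SQ by blast
  have ap: "(\<lambda>i. a i - p i) \<in> l2 I" using a pM Ml2 l2_diff by blast
  have apSQ: "SQ (\<lambda>i. a i - p i)" using ap l2_SQ by blast
  have eqd: "sqv a - p' = sqv (\<lambda>i. a i - p i)" using pp sqv_diff[OF aSQ MSQ[OF pM]] by simp
  have "l2_inner y (\<lambda>i. a i - p i) = 0" if yM: "y \<in> M" for y
  proof -
    have iyM: "(\<lambda>i. \<i> * y i) \<in> M" using Msc yM by blast
    have "inner (sqv a - p') (sqv y) = 0" using orth yM unfolding S_def by blast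
    hence 1: "Re (l2_inner (\<lambda>i. a i - p i) y) = 0"
      unfolding eqd inner_sqv[OF apSQ MSQ[OF yM]] .
    have "inner (sqv a - p') (sqv (\<lambda>i. \<i> * y i)) = 0" using orth iyM unfolding S_def by blast
    hence 2: "Re (l2_inner (\<lambda>i. a i - p i) (\<lambda>i. \<i> * y i)) = 0"
      unfolding eqd inner_sqv[OF apSQ MSQ[OF iyM]] .
    from 1 2 have "l2_inner (\<lambda>i. a i - p i) y = 0"
      by (simp add: l2_inner_scale_right complex_eq_iff)
    thus ?thesis by (subst l2_inner_cnj) simp
  qed
  thus ?thesis using pM ap unfolding ocomp_def by blast
qed




lemma tens_apply[simp]: "tens x y (i, j) = x i * y j" by (simp add: tens_def)

lemma SQ_tens: assumes "SQ x" "SQ y" shows "SQ (tens x y)"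
proof -
  have eq: "(\<lambda>p. (cmod (tens x y p))\<^sup>2) = (\<lambda>(i,j). (cmod (x i))\<^sup>2 * (cmod (y j))\<^sup>2)"
    by (auto simp: fun_eq_iff norm_mult power_mult_distrib)
  have "(\<lambda>(i,j). (cmod (x i))\<^sup>2 * (cmod (y j))\<^sup>2) summable_on Sigma UNIV (\<lambda>_. UNIV)"
  proof (rule summable_on_SigmaI[where g="\<lambda>i. (cmod (x i))\<^sup>2 * (\<Sum>\<^sub>\<infinity>j. (cmod (y j))\<^sup>2)"])
    fix i :: 'a
    show "((\<lambda>j. case (i, j) of (i, j) \<Rightarrow> (cmod (x i))\<^sup>2 * (cmod (y j))\<^sup>2) has_sum
       (cmod (x i))\<^sup>2 * (\<Sum>\<^sub>\<infinity>j. (cmod (y j))\<^sup>2)) UNIV"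
      using assms(2) unfolding SQ_def by (simp add: has_sum_cmult_right)
  next
    show "(\<lambda>i. (cmod (x i))\<^sup>2 * (\<Sum>\<^sub>\<infinity>j. (cmod (y j))\<^sup>2)) summable_on UNIV"
      using assms(1) unfolding SQ_def by (rule summable_on_cmult_left)
  qed auto
  thus ?thesis unfolding SQ_def eq by simp
qed

lemma tens_l2: assumes "x \<in> l2 I" "y \<in> l2 J" shows "tens x y \<in> l2 (I \<times> J)"
  using assms SQ_tens[of x y] unfolding l2_iff by auto

lemma tens_inner: assumes "SQ a" "SQ b" "SQ c" "SQ d"
  shows "l2_inner (tens a b) (tens c d) = l2_inner a c * l2_inner b d"
proof -
  have sm: "(\<lambda>p. cnj (tens a b p) * tens c d p) summable_on Sigma UNIV (\<lambda>_. UNIV)"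
    using SQ_inner_summable[OF SQ_tens[OF assms(1,2)] SQ_tens[OF assms(3,4)]] by simp
  have "l2_inner (tens a b) (tens c d) = (\<Sum>\<^sub>\<infinity>p\<in>Sigma UNIV (\<lambda>_. UNIV). cnj (tens a b p) * tens c d p)"
    unfolding l2_inner_def by simp
  also have "\<dots> = (\<Sum>\<^sub>\<infinity>i. \<Sum>\<^sub>\<infinity>j. cnj (tens a b (i,j)) * tens c d (i,j))"
    using sm by (rule infsum_Sigma_banach[symmetric])
  also have "\<dots> = (\<Sum>\<^sub>\<infinity>i. (cnj (a i) * c i) * l2_inner b d)"
    unfolding l2_inner_def
    by (intro infsum_cong) (simp add: infsum_cmult_right'[symmetric] algebra_simps)
  also have "\<dots> = l2_inner a c * l2_inner b d"
    unfolding l2_inner_def by (rule infsum_cmult_left')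
  finally show ?thesis .
qed

lemma tens_add_left: "tens (\<lambda>i. f i + g i) b = (\<lambda>p. tens f b p + tens g b p)"
  by (auto simp: fun_eq_iff algebra_simps)
lemma tens_add_right: "tens a (\<lambda>i. f i + g i) = (\<lambda>p. tens a f p + tens a g p)"
  by (auto simp: fun_eq_iff algebra_simps)
lemma tens_scale_left: "tens (\<lambda>i. c * f i) b = (\<lambda>p. c * tens f b p)"
  by (auto simp: fun_eq_iff algebra_simps)
lemma tens_scale_right: "tens a (\<lambda>i. c * f i) = (\<lambda>p. c * tens a f p)"
  by (auto simp: fun_eq_iff algebra_simps)
lemma tens_diff_left: "tens (\<lambda>i. f i - g i) b = (\<lambda>p. tens f b p - tens g b p)"
  by (auto simp: fun_eq_iff algebra_simps)
lemma tens_diff_right: "tens a (\<lambda>i. f i - g i) = (\<lambda>p. tens a f p - tens a g p)"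
  by (auto simp: fun_eq_iff algebra_simps)

lemma l2_ocomp: "ocomp I W \<subseteq> l2 I" by (auto simp: ocomp_def)
lemma closed_subspace_l2D: "closed_subspace I V \<Longrightarrow> V \<subseteq> l2 I" by (simp add: closed_subspace_def)

lemma orth_tensor_sub:
  assumes P: "P \<subseteq> l2 I" and Q: "Q \<subseteq> l2 J" and v: "v \<in> l2 (I \<times> J)"
    and gen: "\<And>c d. c \<in> P \<Longrightarrow> d \<in> Q \<Longrightarrow> l2_inner (tens c d) v = 0"
    and u: "u \<in> tensor_sub I J P Q"
  shows "l2_inner u v = 0"
proof -
  have "tensor_sub I J P Q \<subseteq> {u \<in> l2 (I \<times> J). l2_inner u v = 0}"
    unfolding tensor_sub_def
  proof (rule cspan_least[OF orth_closed[OF v]])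
    show "{tens x y |x y. x \<in> P \<and> y \<in> Q} \<subseteq> {u \<in> l2 (I \<times> J). l2_inner u v = 0}"
      using P Q gen tens_l2 by blast
  qed
  thus ?thesis using u by blast
qed

lemma tensor_sub_l2: assumes "P \<subseteq> l2 I" "Q \<subseteq> l2 J"
  shows "closed_subspace (I \<times> J) (tensor_sub I J P Q)"
  unfolding tensor_sub_def using assms tens_l2 by (intro cspan_closed) blast

lemma tens_gen_in: assumes "P \<subseteq> l2 I" "Q \<subseteq> l2 J" "c \<in> P" "d \<in> Q"
  shows "tens c d \<in> tensor_sub I J P Q"
  unfolding tensor_sub_def using assms tens_l2 by (intro cspan_sup[THEN subsetD]) blast+

lemma sumsq_inner: "SQ f \<Longrightarrow> (\<Sum>\<^sub>\<infinity>i. (cmod (f i))\<^sup>2) = Re (l2_inner f f)"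
  by (simp add: l2_inner_self)

lemma sumsq_tens: assumes "SQ d" "SQ b"
  shows "(\<Sum>\<^sub>\<infinity>p. (cmod (tens d b p))\<^sup>2) = (\<Sum>\<^sub>\<infinity>i. (cmod (d i))\<^sup>2) * (\<Sum>\<^sub>\<infinity>j. (cmod (b j))\<^sup>2)"
proof -
  have "(\<Sum>\<^sub>\<infinity>p. (cmod (tens d b p))\<^sup>2) = Re (l2_inner (tens d b) (tens d b))"
    using SQ_tens[OF assms] by (rule sumsq_inner)
  also have "\<dots> = Re (l2_inner d d * l2_inner b b)" using assms by (simp add: tens_inner)
  also have "\<dots> = (\<Sum>\<^sub>\<infinity>i. (cmod (d i))\<^sup>2) * (\<Sum>\<^sub>\<infinity>j. (cmod (b j))\<^sup>2)"
    using assms by (simp add: l2_inner_self)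
  finally show ?thesis .
qed

lemma l2_dist_tens_left: assumes "SQ u" "SQ a" "SQ b"
  shows "l2_dist (tens u b) (tens a b) = l2_dist u a * sqrt (\<Sum>\<^sub>\<infinity>j. (cmod (b j))\<^sup>2)"
proof -
  have e: "tens u b p - tens a b p = tens (\<lambda>i. u i - a i) b p" for p by (simp add: tens_diff_left)
  show ?thesis unfolding l2_dist_def e
    using sumsq_tens[OF SQ_diff[OF assms(1,2)] assms(3)] by (simp add: real_sqrt_mult)
qed

lemma l2_dist_tens_right: assumes "SQ u" "SQ a" "SQ b"
  shows "l2_dist (tens b u) (tens b a) = sqrt (\<Sum>\<^sub>\<infinity>j. (cmod (b j))\<^sup>2) * l2_dist u a"
proof -
  have e: "tens b u p - tens b a p = tens b (\<lambda>i. u i - a i) p" for p by (simp add: tens_diff_right)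
  show ?thesis unfolding l2_dist_def e
    using sumsq_tens[OF assms(3) SQ_diff[OF assms(1,2)]] by (simp add: real_sqrt_mult)
qed

lemma orth_tens_fix_right: assumes b: "b \<in> l2 J" and w: "w \<in> l2 (I \<times> J)"
  shows "closed_subspace I {a \<in> l2 I. l2_inner (tens a b) w = 0}"
  unfolding closed_subspace_def
proof (intro conjI allI impI ballI)
  have bS: "SQ b" and wS: "SQ w" using b w l2_SQ by blast+
  show "(\<lambda>_. 0) \<in> {a \<in> l2 I. l2_inner (tens a b) w = 0}"
    by (simp add: l2_0 l2_inner_def tens_def case_prod_beta)
  fix f g assume f: "f \<in> {a \<in> l2 I. l2_inner (tens a b) w = 0}" and g: "g \<in> {a \<in> l2 I. l2_inner (tens a b) w = 0}"
  hence "SQ f" "SQ g" using l2_SQ by blast+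
  thus "(\<lambda>i. f i + g i) \<in> {a \<in> l2 I. l2_inner (tens a b) w = 0}"
    using f g wS bS by (simp add: l2_add tens_add_left l2_inner_add_left SQ_tens)
next
  fix c :: complex and f assume "f \<in> {a \<in> l2 I. l2_inner (tens a b) w = 0}"
  thus "(\<lambda>i. c * f i) \<in> {a \<in> l2 I. l2_inner (tens a b) w = 0}"
    by (simp add: l2_scale tens_scale_left l2_inner_scale_left)
next
  fix X f assume h: "(\<forall>n. X n \<in> {a \<in> l2 I. l2_inner (tens a b) w = 0}) \<and> f \<in> l2 I \<and> (\<lambda>n. l2_dist (X n) f) \<longlonglongrightarrow> 0"
  have bS: "SQ b" and wS: "SQ w" using b w l2_SQ by blast+
  have XS: "SQ (X n)" for n using h l2_SQ by blast
  have fS: "SQ f" using h l2_SQ by blast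
  have "(\<lambda>n. l2_dist (X n) f * sqrt (\<Sum>\<^sub>\<infinity>j. (cmod (b j))\<^sup>2)) \<longlonglongrightarrow> 0"
    using h tendsto_mult_left_zero by blast
  hence "(\<lambda>n. l2_dist (tens (X n) b) (tens f b)) \<longlonglongrightarrow> 0"
    by (simp add: l2_dist_tens_left[OF XS fS bS])
  hence "(\<lambda>n. l2_inner (tens (X n) b) w) \<longlonglongrightarrow> l2_inner (tens f b) w"
    by (intro inner_lim SQ_tens XS fS bS wS)
  moreover have "(\<lambda>n. l2_inner (tens (X n) b) w) = (\<lambda>_. 0)" using h by auto
  ultimately have "(\<lambda>_. 0) \<longlonglongrightarrow> l2_inner (tens f b) w" by simp
  from LIMSEQ_unique[OF tendsto_const this] have "l2_inner (tens f b) w = 0" by simp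
  thus "f \<in> {a \<in> l2 I. l2_inner (tens a b) w = 0}" using h by simp
qed auto

lemma orth_tens_fix_left: assumes a: "a \<in> l2 I" and w: "w \<in> l2 (I \<times> J)"
  shows "closed_subspace J {b \<in> l2 J. l2_inner (tens a b) w = 0}"
  unfolding closed_subspace_def
proof (intro conjI allI impI ballI)
  have aS: "SQ a" and wS: "SQ w" using a w l2_SQ by blast+
  show "(\<lambda>_. 0) \<in> {b \<in> l2 J. l2_inner (tens a b) w = 0}"
    by (simp add: l2_0 l2_inner_def tens_def case_prod_beta)
  fix f g assume f: "f \<in> {b \<in> l2 J. l2_inner (tens a b) w = 0}" and g: "g \<in> {b \<in> l2 J. l2_inner (tens a b) w = 0}"
  hence "SQ f" "SQ g" using l2_SQ by blast+
  thus "(\<lambda>i. f i + g i) \<in> {b \<in> l2 J. l2_inner (tens a b) w = 0}"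
    using f g wS aS by (simp add: l2_add tens_add_right l2_inner_add_left SQ_tens)
next
  fix c :: complex and f assume "f \<in> {b \<in> l2 J. l2_inner (tens a b) w = 0}"
  thus "(\<lambda>i. c * f i) \<in> {b \<in> l2 J. l2_inner (tens a b) w = 0}"
    by (simp add: l2_scale tens_scale_right l2_inner_scale_left)
next
  fix X f assume h: "(\<forall>n. X n \<in> {b \<in> l2 J. l2_inner (tens a b) w = 0}) \<and> f \<in> l2 J \<and> (\<lambda>n. l2_dist (X n) f) \<longlonglongrightarrow> 0"
  have aS: "SQ a" and wS: "SQ w" using a w l2_SQ by blast+
  have XS: "SQ (X n)" for n using h l2_SQ by blast
  have fS: "SQ f" using h l2_SQ by blast
  have "(\<lambda>n. sqrt (\<Sum>\<^sub>\<infinity>j. (cmod (a j))\<^sup>2) * l2_dist (X n) f) \<longlonglongrightarrow> 0"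
    using h tendsto_mult_right_zero by blast
  hence "(\<lambda>n. l2_dist (tens a (X n)) (tens a f)) \<longlonglongrightarrow> 0"
    by (simp add: l2_dist_tens_right[OF XS fS aS])
  hence "(\<lambda>n. l2_inner (tens a (X n)) w) \<longlonglongrightarrow> l2_inner (tens a f) w"
    by (intro inner_lim SQ_tens XS fS aS wS)
  moreover have "(\<lambda>n. l2_inner (tens a (X n)) w) = (\<lambda>_. 0)" using h by auto
  ultimately have "(\<lambda>_. 0) \<longlonglongrightarrow> l2_inner (tens a f) w" by simp
  from LIMSEQ_unique[OF tendsto_const this] have "l2_inner (tens a f) w = 0" by simp
  thus "f \<in> {b \<in> l2 J. l2_inner (tens a b) w = 0}" using h by simp
qed auto




lemma unit_l2: "unitary_l2 I J U \<Longrightarrow> f \<in> l2 I \<Longrightarrow> U f \<in> l2 J"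
  unfolding unitary_l2_def by blast
lemma unit_surj: "unitary_l2 I J U \<Longrightarrow> h \<in> l2 J \<Longrightarrow> \<exists>f\<in>l2 I. U f = h"
  unfolding unitary_l2_def by (metis imageE)
lemma unit_inner: "unitary_l2 I J U \<Longrightarrow> f \<in> l2 I \<Longrightarrow> g \<in> l2 I \<Longrightarrow> l2_inner (U f) (U g) = l2_inner f g"
  unfolding unitary_l2_def by blast
lemma unit_scale: "unitary_l2 I J U \<Longrightarrow> f \<in> l2 I \<Longrightarrow> U (\<lambda>i. c * f i) = (\<lambda>j. c * U f j)"
  unfolding unitary_l2_def by blast
lemma unit_0: assumes "unitary_l2 I J U" shows "U (\<lambda>_. 0) = (\<lambda>_. 0)"
  using unit_scale[OF assms l2_0, of 0] by simp

lemma slice_l2: assumes "f \<in> l2 (K \<times> I)" shows "(\<lambda>i. f (l, i)) \<in> l2 I"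
proof -
  have "(\<lambda>p. (cmod (f p))\<^sup>2) summable_on UNIV" using assms by (simp add: l2_def)
  moreover have "(\<lambda>(x,y). (cmod (f (x,y)))\<^sup>2) = (\<lambda>p. (cmod (f p))\<^sup>2)"
    by (simp add: fun_eq_iff split: prod.split)
  ultimately have "(\<lambda>(x,y). (cmod (f (x,y)))\<^sup>2) summable_on Sigma UNIV (\<lambda>_. UNIV)" by simp
  hence "(\<lambda>y. (cmod (f (l,y)))\<^sup>2) summable_on UNIV"
    by (rule summable_on_SigmaD1[of "\<lambda>x y. (cmod (f (x,y)))\<^sup>2"]) simp
  thus ?thesis using assms by (auto simp: l2_def)
qed

lemma slice_0: assumes "f \<in> l2 (K \<times> I)" "l \<notin> K" shows "(\<lambda>i. f (l, i)) = (\<lambda>_. 0)"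
  using assms by (auto simp: l2_def)

lemma slice_sums: assumes "SQ f"
  shows "(\<lambda>l. \<Sum>\<^sub>\<infinity>i. (cmod (f (l,i)))\<^sup>2) summable_on UNIV"
    and "(\<Sum>\<^sub>\<infinity>p. (cmod (f p))\<^sup>2) = (\<Sum>\<^sub>\<infinity>l. \<Sum>\<^sub>\<infinity>i. (cmod (f (l,i)))\<^sup>2)"
proof -
  have s: "(\<lambda>p. (cmod (f p))\<^sup>2) summable_on Sigma UNIV (\<lambda>_. UNIV)" using assms by (simp add: SQ_def)
  have e: "(\<lambda>(x,y). (cmod (f (x,y)))\<^sup>2) = (\<lambda>p. (cmod (f p))\<^sup>2)"
    by (simp add: fun_eq_iff split: prod.split)
  have s2: "(\<lambda>i. (cmod (f (l,i)))\<^sup>2) summable_on UNIV" for l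
    using summable_on_SigmaD1[of "\<lambda>x y. (cmod (f (x,y)))\<^sup>2" UNIV "\<lambda>_. UNIV" l] s
    unfolding e by simp
  show "(\<lambda>l. \<Sum>\<^sub>\<infinity>i. (cmod (f (l,i)))\<^sup>2) summable_on UNIV"
    using summable_on_SigmaD[OF s] s2 by simp
  show "(\<Sum>\<^sub>\<infinity>p. (cmod (f p))\<^sup>2) = (\<Sum>\<^sub>\<infinity>l. \<Sum>\<^sub>\<infinity>i. (cmod (f (l,i)))\<^sup>2)"
    using infsum_Sigma_banach[OF s] by simp
qed

lemma tens_right_apply: "tens_right U f (l, j) = U (\<lambda>i. f (l, i)) j"
  by (simp add: tens_right_def)
lemma tens_left_apply: "tens_left U f (j, l) = U (\<lambda>i. f (i, l)) j"
  by (simp add: tens_left_def)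

lemma tens_right_l2: assumes U: "unitary_l2 I J U" and f: "f \<in> l2 (K \<times> I)"
  shows "tens_right U f \<in> l2 (K \<times> J)"
proof -
  have fl: "(\<lambda>i. f (l, i)) \<in> l2 I" for l using slice_l2[OF f] .
  have Ufl: "U (\<lambda>i. f (l, i)) \<in> l2 J" for l using unit_l2[OF U fl] .
  have hs: "((\<lambda>j. (cmod (U (\<lambda>i. f (l, i)) j))\<^sup>2) has_sum (\<Sum>\<^sub>\<infinity>i. (cmod (f (l,i)))\<^sup>2)) UNIV" for l
  proof -
    have "(\<Sum>\<^sub>\<infinity>j. (cmod (U (\<lambda>i. f (l, i)) j))\<^sup>2) = Re (l2_inner (U (\<lambda>i. f (l, i))) (U (\<lambda>i. f (l, i))))"
      using Ufl l2_SQ sumsq_inner by blast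
    also have "\<dots> = Re (l2_inner (\<lambda>i. f (l, i)) (\<lambda>i. f (l, i)))" using unit_inner[OF U fl fl] by simp
    also have "\<dots> = (\<Sum>\<^sub>\<infinity>i. (cmod (f (l,i)))\<^sup>2)" using fl l2_SQ sumsq_inner by metis
    finally have "(\<Sum>\<^sub>\<infinity>j. (cmod (U (\<lambda>i. f (l, i)) j))\<^sup>2) = (\<Sum>\<^sub>\<infinity>i. (cmod (f (l,i)))\<^sup>2)" .
    moreover have "(\<lambda>j. (cmod (U (\<lambda>i. f (l, i)) j))\<^sup>2) summable_on UNIV" using Ufl by (simp add: l2_def)
    ultimately show ?thesis using has_sum_infsum by metis
  qed
  have "(\<lambda>(l,j). (cmod (U (\<lambda>i. f (l, i)) j))\<^sup>2) summable_on Sigma UNIV (\<lambda>_. UNIV)"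
    by (rule summable_on_SigmaI[OF _ slice_sums(1)[OF l2_SQ[OF f]]]) (use hs in auto)
  moreover have "(\<lambda>(l,j). (cmod (U (\<lambda>i. f (l, i)) j))\<^sup>2) = (\<lambda>p. (cmod (tens_right U f p))\<^sup>2)"
    by (simp add: fun_eq_iff tens_right_apply split: prod.split)
  ultimately have sq: "SQ (tens_right U f)" unfolding SQ_def by simp
  have "tens_right U f (l, j) = 0" if "(l, j) \<notin> K \<times> J" for l j
  proof (cases "l \<in> K")
    case True
    hence "j \<notin> J" using that by auto
    thus ?thesis using Ufl[of l] by (simp add: tens_right_apply l2_def)
  next
    case False
    thus ?thesis using slice_0[OF f False] unit_0[OF U] by (simp add: tens_right_apply)
  qed
  thus ?thesis using sq unfolding l2_iff by auto
qed

lemma inner_slices: assumes "SQ f" "SQ h"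
  shows "l2_inner f h = (\<Sum>\<^sub>\<infinity>l. l2_inner (\<lambda>i. f (l, i)) (\<lambda>i. h (l, i)))"
proof -
  have s: "(\<lambda>p. cnj (f p) * h p) summable_on Sigma UNIV (\<lambda>_. UNIV)"
    using SQ_inner_summable[OF assms] by simp
  show ?thesis unfolding l2_inner_def using infsum_Sigma_banach[OF s] by simp
qed

lemma tens_right_inner: assumes U: "unitary_l2 I J U" and f: "f \<in> l2 (K \<times> I)" and h: "h \<in> l2 (K \<times> I)"
  shows "l2_inner (tens_right U f) (tens_right U h) = l2_inner f h"
proof -
  have "l2_inner (tens_right U f) (tens_right U h)
      = (\<Sum>\<^sub>\<infinity>l. l2_inner (U (\<lambda>i. f (l, i))) (U (\<lambda>i. h (l, i))))"
    using inner_slices[OF l2_SQ[OF tens_right_l2[OF U f]] l2_SQ[OF tens_right_l2[OF U h]]]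
    by (simp add: tens_right_apply)
  also have "\<dots> = (\<Sum>\<^sub>\<infinity>l. l2_inner (\<lambda>i. f (l, i)) (\<lambda>i. h (l, i)))"
    using unit_inner[OF U slice_l2[OF f] slice_l2[OF h]] by simp
  also have "\<dots> = l2_inner f h" using inner_slices[OF l2_SQ[OF f] l2_SQ[OF h]] by simp
  finally show ?thesis .
qed

definition sw :: "('a \<times> 'b \<Rightarrow> complex) \<Rightarrow> ('b \<times> 'a \<Rightarrow> complex)" where
  "sw f = (\<lambda>p. f (prod.swap p))"

lemma sw_l2: assumes "f \<in> l2 (I \<times> K)" shows "sw f \<in> l2 (K \<times> I)"
proof -
  have "(\<lambda>p. (cmod (f p))\<^sup>2) summable_on UNIV" using assms by (simp add: l2_def)
  hence "(\<lambda>p. (cmod (f (prod.swap p)))\<^sup>2) summable_on UNIV"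
    using summable_on_reindex_bij_betw[of prod.swap UNIV UNIV "\<lambda>p. (cmod (f p))\<^sup>2"] by simp
  thus ?thesis using assms by (auto simp: l2_def sw_def)
qed

lemma sw_inner: "l2_inner (sw f) (sw h) = l2_inner f h"
  unfolding l2_inner_def sw_def
  using infsum_reindex_bij_betw[of prod.swap UNIV UNIV "\<lambda>p. cnj (f p) * h p"] by simp

lemma sw_sw[simp]: "sw (sw f) = f" by (simp add: sw_def)

lemma tens_left_sw: "tens_left U f = sw (tens_right U (sw f))"
  by (auto simp: fun_eq_iff sw_def tens_left_def tens_right_def)

lemma tens_left_l2: assumes U: "unitary_l2 I J U" and f: "f \<in> l2 (I \<times> K)"
  shows "tens_left U f \<in> l2 (J \<times> K)"
  unfolding tens_left_sw by (intro sw_l2 tens_right_l2[OF U] sw_l2 f)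

lemma tens_left_inner: assumes U: "unitary_l2 I J U" and f: "f \<in> l2 (I \<times> K)" and h: "h \<in> l2 (I \<times> K)"
  shows "l2_inner (tens_left U f) (tens_left U h) = l2_inner f h"
  unfolding tens_left_sw sw_inner
  using tens_right_inner[OF U sw_l2[OF f] sw_l2[OF h]] sw_inner by simp

lemma inner_assoc:
  "l2_inner (\<lambda>((a,b),c). F (a,(b,c))) (\<lambda>((a,b),c). H (a,(b,c))) = l2_inner F H"
  unfolding l2_inner_def
  by (rule infsum_reindex_bij_witness[where j="\<lambda>((a,b),c). (a,(b,c))" and i="\<lambda>(a,(b,c)). ((a,b),c)"]) auto




lemma PSu: "product_system I B \<Longrightarrow> s > 0 \<Longrightarrow> t > 0 \<Longrightarrow> unitary_l2 (I (s + t)) (I s \<times> I t) (B s t)"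
  unfolding product_system_def by blast

lemma PSa: assumes "product_system I B" "r > 0" "s > 0" "t > 0" "f \<in> l2 (I (r + s + t))"
  shows "tens_left (B r s) (B (r + s) t f) = (\<lambda>((a,b),c). tens_right (B s t) (B r (s + t) f) (a,(b,c)))"
  using assms unfolding product_system_def by (auto simp: fun_eq_iff)

lemma ISc: "inclusion_subsystem I B F \<Longrightarrow> t > 0 \<Longrightarrow> closed_subspace (I t) (F t)"
  unfolding inclusion_subsystem_def by blast

lemma ISi: "inclusion_subsystem I B F \<Longrightarrow> s > 0 \<Longrightarrow> t > 0 \<Longrightarrow> v \<in> F (s + t)
   \<Longrightarrow> B s t v \<in> tensor_sub (I s) (I t) (F s) (F t)"
  unfolding inclusion_subsystem_def by blast

lemma perp_lift1:
  assumes U: "unitary_l2 L (P \<times> Q) U" and FF: "FF \<subseteq> l2 L" and FP: "FP \<subseteq> l2 P" and FQ: "FQ \<subseteq> l2 Q"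
    and inc: "\<And>v. v \<in> FF \<Longrightarrow> U v \<in> tensor_sub P Q FP FQ"
    and h: "h \<in> l2 L" and y: "y \<in> ocomp P FP" and b: "b \<in> l2 Q" and Uh: "U h = tens y b"
  shows "h \<in> ocomp L FF"
proof -
  have yl: "y \<in> l2 P" using y l2_ocomp by blast
  have "l2_inner v h = 0" if v: "v \<in> FF" for v
  proof -
    have "l2_inner v h = l2_inner (U v) (tens y b)" using unit_inner[OF U _ h, of v] v FF Uh by auto
    also have "\<dots> = 0"
    proof (rule orth_tensor_sub[OF FP FQ tens_l2[OF yl b] _ inc[OF v]])
      fix c d assume c: "c \<in> FP" and d: "d \<in> FQ"
      have "l2_inner c y = 0" using y c unfolding ocomp_def by blast
      moreover have "SQ c" "SQ d" "SQ y" "SQ b" using c d FP FQ yl b l2_SQ by blast+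
      ultimately show "l2_inner (tens c d) (tens y b) = 0" by (simp add: tens_inner)
    qed
    finally show ?thesis .
  qed
  thus ?thesis using h unfolding ocomp_def by blast
qed

lemma perp_lift2:
  assumes U: "unitary_l2 L (P \<times> Q) U" and FF: "FF \<subseteq> l2 L" and FP: "FP \<subseteq> l2 P" and FQ: "FQ \<subseteq> l2 Q"
    and inc: "\<And>v. v \<in> FF \<Longrightarrow> U v \<in> tensor_sub P Q FP FQ"
    and h: "h \<in> l2 L" and a: "a \<in> l2 P" and x: "x \<in> ocomp Q FQ" and Uh: "U h = tens a x"
  shows "h \<in> ocomp L FF"
proof -
  have xl: "x \<in> l2 Q" using x l2_ocomp by blast
  have "l2_inner v h = 0" if v: "v \<in> FF" for v
  proof -
    have "l2_inner v h = l2_inner (U v) (tens a x)" using unit_inner[OF U _ h, of v] v FF Uh by auto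
    also have "\<dots> = 0"
    proof (rule orth_tensor_sub[OF FP FQ tens_l2[OF a xl] _ inc[OF v]])
      fix c d assume c: "c \<in> FP" and d: "d \<in> FQ"
      have "l2_inner d x = 0" using x d unfolding ocomp_def by blast
      moreover have "SQ c" "SQ d" "SQ a" "SQ x" using c d FP FQ xl a l2_SQ by blast+
      ultimately show "l2_inner (tens c d) (tens a x) = 0" by (simp add: tens_inner)
    qed
    finally show ?thesis .
  qed
  thus ?thesis using h unfolding ocomp_def by blast
qed

lemma Ftilde_closed: "closed_subspace (I t) (Ftilde I B F t)"
  unfolding Ftilde_def by (rule cspan_closed) blast

lemma Ftilde_gen: assumes "G \<in> l2 (I t)" "0 < r" "r < t" "x \<in> ocomp (I r) (F r)"
    "y \<in> ocomp (I (t - r)) (F (t - r))" "B r (t - r) G = tens x y"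
  shows "G \<in> Ftilde I B F t"
  unfolding Ftilde_def by (rule cspan_sup[THEN subsetD]) (use assms in blast)+

lemma Fprime_perp: "z \<in> Fprime I B F t \<Longrightarrow> G \<in> Ftilde I B F t \<Longrightarrow> l2_inner G z = 0"
  unfolding Fprime_def ocomp_def by blast

lemma Fprime_l2: "z \<in> Fprime I B F t \<Longrightarrow> z \<in> l2 (I t)"
  unfolding Fprime_def ocomp_def by blast




lemma KEY1:
  assumes PS: "product_system I B" and IS: "inclusion_subsystem I B F"
    and s: "s > 0" and t: "t > 0" and z: "z \<in> Fprime I B F (s + t)"
    and r: "0 < r" "r < s" and x: "x \<in> ocomp (I r) (F r)" and y: "y \<in> ocomp (I (s - r)) (F (s - r))"
    and g: "g \<in> l2 (I s)" and Bg: "B r (s - r) g = tens x y" and b: "b \<in> l2 (I t)"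
  shows "l2_inner (tens g b) (B s t z) = 0"
proof -
  have sr: "s - r > 0" using r by simp
  have e1: "r + (s - r) = s" and e2: "r + (s - r) + t = s + t" and e3: "r + (s - r + t) = s + t"
    and e4: "s + t - r = s - r + t" by simp_all
  have zl: "z \<in> l2 (I (s + t))" using z Fprime_l2 by blast
  define V where "V = B r (s - r)"
  define W where "W = B (s - r) t"
  have UV: "unitary_l2 (I s) (I r \<times> I (s - r)) V" using PSu[OF PS r(1) sr] unfolding V_def e1 .
  have UW: "unitary_l2 (I (s - r + t)) (I (s - r) \<times> I t) W" using PSu[OF PS sr t] unfolding W_def .
  have UB: "unitary_l2 (I (s + t)) (I s \<times> I t) (B s t)" using PSu[OF PS s t] .
  have UR: "unitary_l2 (I (s + t)) (I r \<times> I (s - r + t)) (B r (s - r + t))"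
    using PSu[OF PS r(1), of "s - r + t"] sr t unfolding e3 by simp
  define w where "w = B s t z"
  define u where "u = B r (s - r + t) z"
  have assoc: "tens_left V w = (\<lambda>((a,b),c). tens_right W u (a,(b,c)))"
    using PSa[OF PS r(1) sr t, of z] zl unfolding e1 e2 V_def W_def w_def u_def by simp
  have wl: "w \<in> l2 (I s \<times> I t)" unfolding w_def using unit_l2[OF UB zl] .
  have ul: "u \<in> l2 (I r \<times> I (s - r + t))" unfolding u_def using unit_l2[OF UR zl] .
  have xl: "x \<in> l2 (I r)" and yl: "y \<in> l2 (I (s - r))" using x y l2_ocomp by blast+
  have gb: "tens g b \<in> l2 (I s \<times> I t)" using tens_l2[OF g b] .
  have "l2_inner (tens g b) w = l2_inner (tens_left V (tens g b)) (tens_left V w)"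
    using tens_left_inner[OF UV gb wl] by simp
  also have "tens_left V (tens g b) = (\<lambda>((a,b'),c). tens x (tens y b) (a,(b',c)))"
  proof -
    have "V (\<lambda>i. g i * b c) = (\<lambda>j. b c * V g j)" for c
      using unit_scale[OF UV g, of "b c"] by (simp add: mult.commute)
    thus ?thesis using Bg unfolding V_def
      by (auto simp: fun_eq_iff tens_left_apply mult.commute mult.left_commute)
  qed
  also note assoc
  also have "l2_inner (\<lambda>((a,b'),c). tens x (tens y b) (a,(b',c))) (\<lambda>((a,b),c). tens_right W u (a,(b,c)))
      = l2_inner (tens x (tens y b)) (tens_right W u)"
    by (rule inner_assoc)
  finally have step1: "l2_inner (tens g b) w = l2_inner (tens x (tens y b)) (tens_right W u)" .
  have ybl: "tens y b \<in> l2 (I (s - r) \<times> I t)" using tens_l2[OF yl b] .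
  obtain h where hl: "h \<in> l2 (I (s - r + t))" and Wh: "W h = tens y b" using unit_surj[OF UW ybl] by blast
  have "tens x (tens y b) = tens_right W (tens x h)"
  proof -
    have "W (\<lambda>i. x a * h i) = (\<lambda>q. x a * W h q)" for a using unit_scale[OF UW hl] .
    thus ?thesis using Wh by (auto simp: fun_eq_iff tens_right_apply)
  qed
  hence "l2_inner (tens g b) w = l2_inner (tens x h) u"
    using step1 tens_right_inner[OF UW tens_l2[OF xl hl] ul] by simp
  moreover obtain G where Gl: "G \<in> l2 (I (s + t))" and BG: "B r (s - r + t) G = tens x h"
    using unit_surj[OF UR tens_l2[OF xl hl]] by blast
  moreover have "l2_inner (tens x h) u = l2_inner G z"
    using unit_inner[OF UR Gl zl] BG unfolding u_def by simp
  moreover have "G \<in> Ftilde I B F (s + t)"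
  proof (rule Ftilde_gen[where I=I and F=F and B=B and t="s + t" and r=r, OF Gl r(1) _ x])
    show "r < s + t" using r t by simp
    have "h \<in> ocomp (I (s - r + t)) (F (s - r + t))"
    proof (rule perp_lift1[OF UW _ _ _ _ hl y b Wh])
      show "F (s - r + t) \<subseteq> l2 (I (s - r + t))" using ISc[OF IS, of "s - r + t"] sr t closed_subspace_l2D by simp
      show "F (s - r) \<subseteq> l2 (I (s - r))" using ISc[OF IS sr] closed_subspace_l2D by blast
      show "F t \<subseteq> l2 (I t)" using ISc[OF IS t] closed_subspace_l2D by blast
      show "W v \<in> tensor_sub (I (s - r)) (I t) (F (s - r)) (F t)" if "v \<in> F (s - r + t)" for v
        using ISi[OF IS sr t that] unfolding W_def .
    qed
    thus "h \<in> ocomp (I (s + t - r)) (F (s + t - r))" unfolding e4 .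
    show "B r (s + t - r) G = tens x h" unfolding e4 by (rule BG)
  qed
  ultimately show ?thesis using Fprime_perp[OF z] unfolding w_def by simp
qed

lemma KEY2:
  assumes PS: "product_system I B" and IS: "inclusion_subsystem I B F"
    and s: "s > 0" and t: "t > 0" and z: "z \<in> Fprime I B F (s + t)"
    and r: "0 < r" "r < t" and x: "x \<in> ocomp (I r) (F r)" and y: "y \<in> ocomp (I (t - r)) (F (t - r))"
    and g: "g \<in> l2 (I t)" and Bg: "B r (t - r) g = tens x y" and a: "a \<in> l2 (I s)"
  shows "l2_inner (tens a g) (B s t z) = 0"
proof -
  have tr: "t - r > 0" using r by simp
  have sr: "s + r > 0" using s r by simp
  have e1: "r + (t - r) = t" and e2: "s + r + (t - r) = s + t" and e4: "s + t - (s + r) = t - r"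
    by simp_all
  have zl: "z \<in> l2 (I (s + t))" using z Fprime_l2 by blast
  define V where "V = B s r"
  define W where "W = B r (t - r)"
  have UW: "unitary_l2 (I t) (I r \<times> I (t - r)) W" using PSu[OF PS r(1) tr] unfolding W_def e1 .
  have UV: "unitary_l2 (I (s + r)) (I s \<times> I r) V" using PSu[OF PS s r(1)] unfolding V_def .
  have UB: "unitary_l2 (I (s + t)) (I s \<times> I t) (B s t)" using PSu[OF PS s t] .
  have UR: "unitary_l2 (I (s + t)) (I (s + r) \<times> I (t - r)) (B (s + r) (t - r))"
    using PSu[OF PS sr tr] unfolding e2 .
  define w where "w = B s t z"
  define u where "u = B (s + r) (t - r) z"
  have assoc: "tens_left V u = (\<lambda>((a,b),c). tens_right W w (a,(b,c)))"
    using PSa[OF PS s r(1) tr, of z] zl unfolding e1 e2 V_def W_def w_def u_def by simp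
  have wl: "w \<in> l2 (I s \<times> I t)" unfolding w_def using unit_l2[OF UB zl] .
  have ul: "u \<in> l2 (I (s + r) \<times> I (t - r))" unfolding u_def using unit_l2[OF UR zl] .
  have xl: "x \<in> l2 (I r)" and yl: "y \<in> l2 (I (t - r))" using x y l2_ocomp by blast+
  have ag: "tens a g \<in> l2 (I s \<times> I t)" using tens_l2[OF a g] .
  have "l2_inner (tens a g) w = l2_inner (tens_right W (tens a g)) (tens_right W w)"
    using tens_right_inner[OF UW ag wl] by simp
  also have "tens_right W (tens a g) = tens a (tens x y)"
  proof -
    have "W (\<lambda>i. a l * g i) = (\<lambda>j. a l * W g j)" for l using unit_scale[OF UW g] .
    thus ?thesis using Bg unfolding W_def by (auto simp: fun_eq_iff tens_right_apply)
  qed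
  also have "l2_inner (tens a (tens x y)) (tens_right W w)
     = l2_inner (\<lambda>((p,q),c). tens a (tens x y) (p,(q,c))) (\<lambda>((p,q),c). tens_right W w (p,(q,c)))"
    by (rule inner_assoc[symmetric])
  also have "(\<lambda>((p,q),c). tens a (tens x y) (p,(q,c))) = tens (tens a x) y"
    by (auto simp: fun_eq_iff mult.assoc)
  also have "(\<lambda>((p,q),c). tens_right W w (p,(q,c))) = tens_left V u" using assoc by simp
  finally have step1: "l2_inner (tens a g) w = l2_inner (tens (tens a x) y) (tens_left V u)" .
  have axl: "tens a x \<in> l2 (I s \<times> I r)" using tens_l2[OF a xl] .
  obtain h where hl: "h \<in> l2 (I (s + r))" and Vh: "V h = tens a x" using unit_surj[OF UV axl] by blast
  have "tens (tens a x) y = tens_left V (tens h y)"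
  proof -
    have "V (\<lambda>i. h i * y c) = (\<lambda>q. y c * V h q)" for c
      using unit_scale[OF UV hl, of "y c"] by (simp add: mult.commute)
    thus ?thesis using Vh by (auto simp: fun_eq_iff tens_left_apply mult.commute)
  qed
  hence "l2_inner (tens a g) w = l2_inner (tens h y) u"
    using step1 tens_left_inner[OF UV tens_l2[OF hl yl] ul] by simp
  moreover obtain G where Gl: "G \<in> l2 (I (s + t))" and BG: "B (s + r) (t - r) G = tens h y"
    using unit_surj[OF UR tens_l2[OF hl yl]] by blast
  moreover have "l2_inner (tens h y) u = l2_inner G z"
    using unit_inner[OF UR Gl zl] BG unfolding u_def by simp
  moreover have "G \<in> Ftilde I B F (s + t)"
  proof (rule Ftilde_gen[where I=I and F=F and B=B and t="s + t" and r="s + r", OF Gl sr])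
    show "s + r < s + t" using r by simp
    show "h \<in> ocomp (I (s + r)) (F (s + r))"
    proof (rule perp_lift2[OF UV _ _ _ _ hl a x Vh])
      show "F (s + r) \<subseteq> l2 (I (s + r))" using ISc[OF IS sr] closed_subspace_l2D by blast
      show "F s \<subseteq> l2 (I s)" using ISc[OF IS s] closed_subspace_l2D by blast
      show "F r \<subseteq> l2 (I r)" using ISc[OF IS r(1)] closed_subspace_l2D by blast
      show "V v \<in> tensor_sub (I s) (I r) (F s) (F r)" if "v \<in> F (s + r)" for v
        using ISi[OF IS s r(1) that] unfolding V_def .
    qed
    show "y \<in> ocomp (I (s + t - (s + r))) (F (s + t - (s + r)))" unfolding e4 by (rule y)
    show "B (s + r) (s + t - (s + r)) G = tens h y" unfolding e4 by (rule BG)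
  qed
  ultimately show ?thesis using Fprime_perp[OF z] unfolding w_def by simp
qed




lemma l2_inner_diff_right: "SQ f \<Longrightarrow> SQ g \<Longrightarrow> SQ h \<Longrightarrow>
   l2_inner h (\<lambda>i. f i - g i) = l2_inner h f - l2_inner h g"
proof -
  assume a: "SQ f" "SQ g" "SQ h"
  have "l2_inner h (\<lambda>i. f i + (-1) * g i) = l2_inner h f + l2_inner h (\<lambda>i. (-1) * g i)"
    using a by (intro l2_inner_add_right SQ_scale)
  moreover have "l2_inner h (\<lambda>i. - g i) = - l2_inner h g"
    using l2_inner_scale_right[of h "-1" g] by simp
  ultimately show ?thesis by simp
qed

definition delta :: "'a \<Rightarrow> 'a \<Rightarrow> complex" where "delta i = (\<lambda>k. if k = i then 1 else 0)"

lemma delta_l2: assumes "i \<in> I" shows "delta i \<in> l2 I"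
proof -
  have "(\<lambda>k. (cmod (delta i k))\<^sup>2) summable_on UNIV"
    by (rule finite_nonzero_values_imp_summable_on) (simp add: delta_def)
  thus ?thesis using assms by (auto simp: l2_def delta_def)
qed

lemma inner_delta: "l2_inner (tens (delta i) (delta j)) q = q (i, j)"
proof -
  have "l2_inner (tens (delta i) (delta j)) q = (\<Sum>\<^sub>\<infinity>p\<in>{(i,j)}. q p)"
    unfolding l2_inner_def by (rule infsum_cong_neutral) (auto simp: delta_def split: if_splits)
  thus ?thesis by simp
qed

lemma MAIN:
  assumes PS: "product_system I B" and IS: "inclusion_subsystem I B F"
    and s: "s > 0" and t: "t > 0" and z: "z \<in> Fprime I B F (s + t)"
  shows "B s t z \<in> tensor_sub (I s) (I t) (Fprime I B F s) (Fprime I B F t)"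
proof -
  define w where "w = B s t z"
  have zl: "z \<in> l2 (I (s + t))" using z Fprime_l2 by blast
  have wl: "w \<in> l2 (I s \<times> I t)" unfolding w_def using unit_l2[OF PSu[OF PS s t] zl] .
  have H1: "l2_inner (tens a b) w = 0" if a: "a \<in> Ftilde I B F s" and b: "b \<in> l2 (I t)" for a b
  proof -
    have "Ftilde I B F s \<subseteq> {a \<in> l2 (I s). l2_inner (tens a b) w = 0}"
      unfolding Ftilde_def
    proof (rule cspan_least[OF orth_tens_fix_right[OF b wl]])
      show "{z \<in> l2 (I s). \<exists>r x y. 0 < r \<and> r < s \<and> x \<in> ocomp (I r) (F r) \<and>
           y \<in> ocomp (I (s - r)) (F (s - r)) \<and> B r (s - r) z = tens x y}
          \<subseteq> {a \<in> l2 (I s). l2_inner (tens a b) w = 0}"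
        using KEY1[OF PS IS s t z _ _ _ _ _ _ b] unfolding w_def by blast
    qed
    thus ?thesis using a by blast
  qed
  have H2: "l2_inner (tens a b) w = 0" if a: "a \<in> l2 (I s)" and b: "b \<in> Ftilde I B F t" for a b
  proof -
    have "Ftilde I B F t \<subseteq> {b \<in> l2 (I t). l2_inner (tens a b) w = 0}"
      unfolding Ftilde_def
    proof (rule cspan_least[OF orth_tens_fix_left[OF a wl]])
      show "{z \<in> l2 (I t). \<exists>r x y. 0 < r \<and> r < t \<and> x \<in> ocomp (I r) (F r) \<and>
           y \<in> ocomp (I (t - r)) (F (t - r)) \<and> B r (t - r) z = tens x y}
          \<subseteq> {b \<in> l2 (I t). l2_inner (tens a b) w = 0}"
        using KEY2[OF PS IS s t z _ _ _ _ _ _ a] unfolding w_def by blast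
    qed
    thus ?thesis using b by blast
  qed
  define FS where "FS = Fprime I B F s"
  define FT where "FT = Fprime I B F t"
  have FSl: "FS \<subseteq> l2 (I s)" and FTl: "FT \<subseteq> l2 (I t)"
    unfolding FS_def FT_def Fprime_def using l2_ocomp by blast+
  define M where "M = tensor_sub (I s) (I t) FS FT"
  have Mc: "closed_subspace (I s \<times> I t) M" unfolding M_def using tensor_sub_l2[OF FSl FTl] .
  obtain p where pM: "p \<in> M" and q: "(\<lambda>i. w i - p i) \<in> ocomp (I s \<times> I t) M"
    using proj_l2[OF Mc wl] by blast
  define q where "q = (\<lambda>i. w i - p i)"
  have pl: "p \<in> l2 (I s \<times> I t)" using pM Mc closed_subspace_l2D by blast
  have ql: "q \<in> l2 (I s \<times> I t)" using q l2_ocomp unfolding q_def by blast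
  have qperp: "l2_inner (tens a b) q = 0" if a: "a \<in> l2 (I s)" and b: "b \<in> l2 (I t)" for a b
  proof -
    obtain a1 where a1: "a1 \<in> Ftilde I B F s" and a2: "(\<lambda>i. a i - a1 i) \<in> FS"
      using proj_l2[OF Ftilde_closed[where I=I and t=s and B=B and F=F] a] unfolding FS_def Fprime_def by blast
    obtain b1 where b1: "b1 \<in> Ftilde I B F t" and b2: "(\<lambda>i. b i - b1 i) \<in> FT"
      using proj_l2[OF Ftilde_closed[where I=I and t=t and B=B and F=F] b] unfolding FT_def Fprime_def by blast
    define a2 where "a2 = (\<lambda>i. a i - a1 i)"
    define b2 where "b2 = (\<lambda>i. b i - b1 i)"
    have a1l: "a1 \<in> l2 (I s)" using a1 Ftilde_closed closed_subspace_l2D by blast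
    have b1l: "b1 \<in> l2 (I t)" using b1 Ftilde_closed closed_subspace_l2D by blast
    have a2l: "a2 \<in> l2 (I s)" using a2 FSl unfolding a2_def by blast
    have b2l: "b2 \<in> l2 (I t)" using b2 FTl unfolding b2_def by blast
    have SQs: "SQ a" "SQ b" "SQ a1" "SQ b1" "SQ a2" "SQ b2" "SQ w" "SQ p" "SQ q"
      using a b a1l b1l a2l b2l wl pl ql l2_SQ by blast+
    have dec: "tens a b = (\<lambda>x. (\<lambda>x. tens a1 b x + tens a2 b1 x) x + tens a2 b2 x)"
      by (auto simp: fun_eq_iff a2_def b2_def algebra_simps)
    have i1: "l2_inner (tens a1 b) q = 0"
    proof -
      have "l2_inner p (tens a1 b) = 0"
      proof (rule orth_tensor_sub[OF FSl FTl tens_l2[OF a1l b] _ pM[unfolded M_def]])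
        fix c d assume c: "c \<in> FS" and d: "d \<in> FT"
        have "l2_inner a1 c = 0" using c a1 unfolding FS_def Fprime_def ocomp_def by blast
        hence "l2_inner c a1 = 0" by (subst l2_inner_cnj) simp
        moreover have "SQ c" "SQ d" using c d FSl FTl l2_SQ by blast+
        ultimately show "l2_inner (tens c d) (tens a1 b) = 0" using SQs by (simp add: tens_inner)
      qed
      hence "l2_inner (tens a1 b) p = 0" by (subst l2_inner_cnj) simp
      moreover have "l2_inner (tens a1 b) w = 0" using H1[OF a1 b] .
      ultimately show ?thesis unfolding q_def
        using SQs by (simp add: l2_inner_diff_right SQ_tens)
    qed
    have i2: "l2_inner (tens a2 b1) q = 0"
    proof -
      have "l2_inner p (tens a2 b1) = 0"
      proof (rule orth_tensor_sub[OF FSl FTl tens_l2[OF a2l b1l] _ pM[unfolded M_def]])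
        fix c d assume c: "c \<in> FS" and d: "d \<in> FT"
        have "l2_inner b1 d = 0" using d b1 unfolding FT_def Fprime_def ocomp_def by blast
        hence "l2_inner d b1 = 0" by (subst l2_inner_cnj) simp
        moreover have "SQ c" "SQ d" using c d FSl FTl l2_SQ by blast+
        ultimately show "l2_inner (tens c d) (tens a2 b1) = 0" using SQs by (simp add: tens_inner)
      qed
      hence "l2_inner (tens a2 b1) p = 0" by (subst l2_inner_cnj) simp
      moreover have "l2_inner (tens a2 b1) w = 0" using H2[OF a2l b1] .
      ultimately show ?thesis unfolding q_def
        using SQs by (simp add: l2_inner_diff_right SQ_tens)
    qed
    have i3: "l2_inner (tens a2 b2) q = 0"
    proof -
      have "tens a2 b2 \<in> M" unfolding M_def
        using tens_gen_in[OF FSl FTl] a2 b2 unfolding a2_def b2_def by blast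
      thus ?thesis using q unfolding q_def ocomp_def by blast
    qed
    show ?thesis unfolding dec
      using SQs i1 i2 i3 by (simp add: l2_inner_add_left SQ_tens SQ_add)
  qed
  have "q = (\<lambda>_. 0)"
  proof
    fix pp :: "'a \<times> 'a"
    obtain i j where pp: "pp = (i, j)" by fastforce
    show "q pp = 0"
    proof (cases "i \<in> I s \<and> j \<in> I t")
      case True
      thus ?thesis using qperp[OF delta_l2[of i "I s"] delta_l2[of j "I t"]] inner_delta[of i j q] pp by simp
    next
      case False
      thus ?thesis using ql pp unfolding l2_iff by auto
    qed
  qed
  hence "w = p" unfolding q_def by (auto simp: fun_eq_iff)
  thus ?thesis using pM unfolding M_def FS_def FT_def w_def by simp
qed

theorem mainTheorem12:
  fixes I :: "real \<Rightarrow> 'a set"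
    and B :: "real \<Rightarrow> real \<Rightarrow> ('a \<Rightarrow> complex) \<Rightarrow> ('a \<times> 'a \<Rightarrow> complex)"
    and F :: "real \<Rightarrow> ('a \<Rightarrow> complex) set"
  assumes "product_system I B"
    and "inclusion_subsystem I B F"
  shows "\<forall>s>0. \<forall>t>0. B s t ` Fprime I B F (s + t)
           \<subseteq> tensor_sub (I s) (I t) (Fprime I B F s) (Fprime I B F t)"
  using MAIN[OF assms] by blast


end
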